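(* There exist an absolute constant $c>0$ and a function $N(d,\varepsilon)=\tilde\Theta(\sqrt d/\varepsilon)$ such that for every $d\in\mathbb N$, every $\varepsilon\in(0,1]$, every $n\le N(d,\varepsilon)$, and all $\eta\ge1$, $\alpha\in[0,1]$ with $\eta\alpha<1/2$, there is no $(\varepsilon,\delta)$-DP mechanism with $\delta\le c/n$ for $\textsc{1-Way-Marginals}(n,d)$ that is $(\eta,\alpha,1/75)$-accurate. In particular, no such mechanism is $(\eta,\alpha)$-accurate.
   Context: $\textsc{1-Way-Marginals}(n,d)$: on a private $Y\in\{0,1\}^{n\times d}$ output estimates $a_j$ of $\frac1n\sum_iY_{i,j}$, $j\in[d]$; neighboring inputs differ in a single row. A mechanism $\mathcal M$ is $(\varepsilon,\delta)$-DP if $\Pr[\mathcal M(Y)\in S]\le e^\varepsilon\Pr[\mathcal M(Y')\in S]+\delta$ for all neighbors $Y,Y'$ and all $S$. An output is $(\eta,\alpha,\beta)$-accurate for $Y$ if $\frac1\eta\cdot\frac1n\sum_iY_{i,j}-\alpha\le a_j\le\eta\cdot\frac1n\sum_iY_{i,j}+\alpha$ for at least a $(1-\beta)$ fraction of columns $j$; $(\eta,\alpha)$-accurate means $(\eta,\alpha,0)$-accurate. A mechanism is $(\eta,\alpha,\beta)$-accurate if for every $Y$ its output is $(\eta,\alpha,\beta)$-accurate with probability at least $2/3$. $\tilde\Theta$ hides polylogarithmic factors in $d$. *)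

theory Defs
  imports "HOL-Probability.Probability"
begin

text \<open>A dataset Y in {0,1}^(n x d) is represented as a function nat => nat => bool
  which is False outside the index range [0,n) x [0,d).\<close>
definition datasets :: "nat \<Rightarrow> nat \<Rightarrow> (nat \<Rightarrow> nat \<Rightarrow> bool) set" where
  "datasets n d = {Y. \<forall>i j. (n \<le> i \<or> d \<le> j) \<longrightarrow> \<not> Y i j}"

definition neighbors :: "nat \<Rightarrow> nat \<Rightarrow> (nat \<Rightarrow> nat \<Rightarrow> bool) \<Rightarrow> (nat \<Rightarrow> nat \<Rightarrow> bool) \<Rightarrow> bool" where
  "neighbors n d Y Y' \<longleftrightarrow> Y \<in> datasets n d \<and> Y' \<in> datasets n d \<and>
     (\<exists>i<n. \<forall>i'. i' \<noteq> i \<longrightarrow> (\<forall>j. Y i' j = Y' i' j))"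

definition out_space :: "nat \<Rightarrow> (nat \<Rightarrow> real) measure" where
  "out_space d = PiM {..<d} (\<lambda>_. borel)"

definition is_mechanism :: "nat \<Rightarrow> nat \<Rightarrow> ((nat \<Rightarrow> nat \<Rightarrow> bool) \<Rightarrow> (nat \<Rightarrow> real) measure) \<Rightarrow> bool" where
  "is_mechanism n d M \<longleftrightarrow> (\<forall>Y\<in>datasets n d. prob_space (M Y) \<and> sets (M Y) = sets (out_space d))"

definition differentially_private ::
  "nat \<Rightarrow> nat \<Rightarrow> real \<Rightarrow> real \<Rightarrow> ((nat \<Rightarrow> nat \<Rightarrow> bool) \<Rightarrow> (nat \<Rightarrow> real) measure) \<Rightarrow> bool" where
  "differentially_private n d \<epsilon> \<delta> M \<longleftrightarrow>
     (\<forall>Y Y'. neighbors n d Y Y' \<longrightarrow>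
        (\<forall>S\<in>sets (out_space d). measure (M Y) S \<le> exp \<epsilon> * measure (M Y') S + \<delta>))"

definition col_mean :: "nat \<Rightarrow> (nat \<Rightarrow> nat \<Rightarrow> bool) \<Rightarrow> nat \<Rightarrow> real" where
  "col_mean n Y j = (1 / real n) * (\<Sum>i<n. if Y i j then 1 else 0)"

definition output_accurate ::
  "nat \<Rightarrow> nat \<Rightarrow> real \<Rightarrow> real \<Rightarrow> real \<Rightarrow> (nat \<Rightarrow> nat \<Rightarrow> bool) \<Rightarrow> (nat \<Rightarrow> real) \<Rightarrow> bool" where
  "output_accurate n d \<eta> \<alpha> \<beta> Y a \<longleftrightarrow>
     real (card {j\<in>{..<d}. (1/\<eta>) * col_mean n Y j - \<alpha> \<le> a j \<and> a j \<le> \<eta> * col_mean n Y j + \<alpha>})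
       \<ge> (1 - \<beta>) * real d"

definition mechanism_accurate ::
  "nat \<Rightarrow> nat \<Rightarrow> real \<Rightarrow> real \<Rightarrow> real \<Rightarrow> ((nat \<Rightarrow> nat \<Rightarrow> bool) \<Rightarrow> (nat \<Rightarrow> real) measure) \<Rightarrow> bool" where
  "mechanism_accurate n d \<eta> \<alpha> \<beta> M \<longleftrightarrow>
     (\<forall>Y\<in>datasets n d.
        measure (M Y) {a \<in> space (M Y). output_accurate n d \<eta> \<alpha> \<beta> Y a} \<ge> 2/3)"

end

theory Submission
  imports Defs
begin

lemma sum_PiE_split:
  assumes "finite J" "j \<in> J"
  shows "(\<Sum>\<omega>\<in>PiE J S. F \<omega>) = (\<Sum>\<rho>\<in>PiE (J - {j}) S. \<Sum>s\<in>S j. F (\<rho>(j := s)))"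
proof -
  have J: "J = insert j (J - {j})" using assms by auto
  have "(\<Sum>\<omega>\<in>PiE J S. F \<omega>) = (\<Sum>\<omega>\<in>PiE (insert j (J - {j})) S. F \<omega>)"
    using J by simp
  also have "\<dots> = (\<Sum>\<omega>\<in>(\<lambda>(y, g). g(j := y)) ` (S j \<times> PiE (J - {j}) S). F \<omega>)"
    by (simp only: PiE_insert_eq)
  also have "\<dots> = (\<Sum>z\<in>S j \<times> PiE (J - {j}) S. F ((\<lambda>(y, g). g(j := y)) z))"
    by (rule sum.reindex[unfolded comp_def]) (rule inj_combinator, simp)
  also have "\<dots> = (\<Sum>s\<in>S j. \<Sum>\<rho>\<in>PiE (J - {j}) S. F (\<rho>(j := s)))"
    by (simp add: sum.cartesian_product case_prod_unfold)
  also have "\<dots> = (\<Sum>\<rho>\<in>PiE (J - {j}) S. \<Sum>s\<in>S j. F (\<rho>(j := s)))"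
    by (rule sum.swap)
  finally show ?thesis .
qed

lemma prod_upd_split:
  assumes "finite J" "j \<in> J"
  shows "(\<Prod>j'\<in>J. D ((\<rho>(j := s)) j')) = D s * (\<Prod>j'\<in>J - {j}. D (\<rho> j'))"
proof -
  have "(\<Prod>j'\<in>J. D ((\<rho>(j := s)) j')) = D ((\<rho>(j := s)) j) * (\<Prod>j'\<in>J - {j}. D ((\<rho>(j := s)) j'))"
    using assms by (simp add: prod.remove)
  also have "(\<Prod>j'\<in>J - {j}. D ((\<rho>(j := s)) j')) = (\<Prod>j'\<in>J - {j}. D (\<rho> j'))"
    by (rule prod.cong) auto
  finally show ?thesis by simp
qed

lemma sum_W_one:
  fixes D :: "'b \<Rightarrow> real"
  assumes "finite J" "finite Sc" "sum D Sc = 1"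
  shows "(\<Sum>\<omega>\<in>PiE J (\<lambda>_. Sc). \<Prod>j\<in>J. D (\<omega> j)) = 1"
  using prod_sum_PiE[of J "\<lambda>_. Sc" "\<lambda>_ s. D s"] assms by simp

lemma sum_W_split:
  fixes D :: "'b \<Rightarrow> real"
  assumes "finite J" "j \<in> J"
  shows "(\<Sum>\<omega>\<in>PiE J (\<lambda>_. Sc). (\<Prod>j\<in>J. D (\<omega> j)) * G \<omega>) =
    (\<Sum>\<rho>\<in>PiE (J - {j}) (\<lambda>_. Sc). (\<Prod>j'\<in>J - {j}. D (\<rho> j')) * (\<Sum>s\<in>Sc. D s * G (\<rho>(j := s))))"
  apply (subst sum_PiE_split[OF assms])
  apply (rule sum.cong, simp)
  apply (simp only: prod_upd_split[OF assms])
  apply (simp add: sum_distrib_left mult_ac)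
  done

lemma sum_W_marginal:
  fixes D :: "'b \<Rightarrow> real"
  assumes "finite J" "j \<in> J" "finite Sc" "sum D Sc = 1"
  shows "(\<Sum>\<omega>\<in>PiE J (\<lambda>_. Sc). (\<Prod>j\<in>J. D (\<omega> j)) * F (\<omega> j)) = (\<Sum>s\<in>Sc. D s * F s)"
proof -
  have "(\<Sum>\<omega>\<in>PiE J (\<lambda>_. Sc). (\<Prod>j\<in>J. D (\<omega> j)) * F (\<omega> j)) =
    (\<Sum>\<rho>\<in>PiE (J - {j}) (\<lambda>_. Sc). (\<Prod>j'\<in>J - {j}. D (\<rho> j')) * (\<Sum>s\<in>Sc. D s * F s))"
    by (subst sum_W_split[OF assms(1,2)]) simp
  also have "\<dots> = (\<Sum>\<rho>\<in>PiE (J - {j}) (\<lambda>_. Sc). (\<Prod>j'\<in>J - {j}. D (\<rho> j'))) * (\<Sum>s\<in>Sc. D s * F s)"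
    by (simp add: sum_distrib_right)
  also have "(\<Sum>\<rho>\<in>PiE (J - {j}) (\<lambda>_. Sc). (\<Prod>j'\<in>J - {j}. D (\<rho> j'))) = 1"
    using assms by (intro sum_W_one) auto
  finally show ?thesis by simp
qed

lemma sum_W_marginal2:
  fixes D :: "'b \<Rightarrow> real"
  assumes "finite J" "j \<in> J" "j' \<in> J" "j \<noteq> j'" "finite Sc" "sum D Sc = 1"
  shows "(\<Sum>\<omega>\<in>PiE J (\<lambda>_. Sc). (\<Prod>j\<in>J. D (\<omega> j)) * (F (\<omega> j) * G (\<omega> j'))) =
     (\<Sum>s\<in>Sc. D s * F s) * (\<Sum>s\<in>Sc. D s * G s)"
proof -
  have "(\<Sum>\<omega>\<in>PiE J (\<lambda>_. Sc). (\<Prod>j\<in>J. D (\<omega> j)) * (F (\<omega> j) * G (\<omega> j'))) =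
    (\<Sum>\<rho>\<in>PiE (J - {j}) (\<lambda>_. Sc). (\<Prod>j'\<in>J - {j}. D (\<rho> j')) * ((\<Sum>s\<in>Sc. D s * F s) * G (\<rho> j')))"
  proof (subst sum_W_split[OF assms(1,2)], rule sum.cong)
    fix \<rho> assume "\<rho> \<in> PiE (J - {j}) (\<lambda>_. Sc)"
    have "(\<Sum>s\<in>Sc. D s * (F ((\<rho>(j := s)) j) * G ((\<rho>(j := s)) j'))) = (\<Sum>s\<in>Sc. D s * F s) * G (\<rho> j')"
      using assms(4) by (simp add: sum_distrib_left sum_distrib_right mult.left_commute mult.commute)
    then show "(\<Prod>j'\<in>J - {j}. D (\<rho> j')) * (\<Sum>s\<in>Sc. D s * (F ((\<rho>(j := s)) j) * G ((\<rho>(j := s)) j'))) =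
      (\<Prod>j'\<in>J - {j}. D (\<rho> j')) * ((\<Sum>s\<in>Sc. D s * F s) * G (\<rho> j'))" by simp
  qed simp
  also have "\<dots> = (\<Sum>s\<in>Sc. D s * F s) * (\<Sum>\<rho>\<in>PiE (J - {j}) (\<lambda>_. Sc). (\<Prod>j'\<in>J - {j}. D (\<rho> j')) * G (\<rho> j'))"
    unfolding sum_distrib_left[of "\<Sum>s\<in>Sc. D s * F s"] by (rule sum.cong) (simp_all add: mult_ac)
  also have "(\<Sum>\<rho>\<in>PiE (J - {j}) (\<lambda>_. Sc). (\<Prod>j'\<in>J - {j}. D (\<rho> j')) * G (\<rho> j')) = (\<Sum>s\<in>Sc. D s * G s)"
    using assms by (intro sum_W_marginal) auto
  finally show ?thesis .
qed

lemma jensen_sq: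
  fixes w f :: "'a \<Rightarrow> real"
  assumes "finite S" "\<And>s. s \<in> S \<Longrightarrow> 0 \<le> w s" "sum w S = 1"
  shows "(\<Sum>s\<in>S. w s * f s)^2 \<le> (\<Sum>s\<in>S. w s * (f s)^2)"
proof -
  have "(\<Sum>s\<in>S. sqrt (w s) * (sqrt (w s) * f s))^2 \<le> (\<Sum>s\<in>S. (sqrt (w s))^2) * (\<Sum>s\<in>S. (sqrt (w s) * f s)^2)"
    by (rule Cauchy_Schwarz_ineq_sum)
  moreover have "(\<Sum>s\<in>S. sqrt (w s) * (sqrt (w s) * f s)) = (\<Sum>s\<in>S. w s * f s)"
    using assms(2) by (intro sum.cong) (auto simp: mult.assoc[symmetric])
  moreover have "(\<Sum>s\<in>S. (sqrt (w s))^2) = 1" using assms by simp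
  moreover have "(\<Sum>s\<in>S. (sqrt (w s) * f s)^2) = (\<Sum>s\<in>S. w s * (f s)^2)"
    using assms(2) by (intro sum.cong) (auto simp: power_mult_distrib)
  ultimately show ?thesis by simp
qed

lemma dp_fun:
  fixes q q' h :: "'u \<Rightarrow> real"
  assumes "finite Os" "\<And>R. R \<subseteq> Os \<Longrightarrow> sum q R \<le> e * sum q' R + \<delta>"
    and "\<And>u. u \<in> Os \<Longrightarrow> 0 \<le> h u" "\<And>u. u \<in> Os \<Longrightarrow> h u \<le> T" "0 \<le> T"
  shows "(\<Sum>u\<in>Os. q u * h u) \<le> e * (\<Sum>u\<in>Os. q' u * h u) + \<delta> * T"
proof -
  define R where "R = {u\<in>Os. q u > e * q' u}"
  have fR: "finite R" "finite (Os - R)" "R \<subseteq> Os" using assms(1) by (auto simp: R_def)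
  have split: "\<And>g. (\<Sum>u\<in>Os. g u) = (\<Sum>u\<in>R. g u) + (\<Sum>u\<in>Os - R. g u)"
    using sum.subset_diff[OF fR(3) assms(1)] by (simp add: add.commute)
  have 1: "(\<Sum>u\<in>Os - R. q u * h u) \<le> (\<Sum>u\<in>Os - R. e * q' u * h u)"
    by (intro sum_mono mult_right_mono) (auto simp: R_def assms(3))
  have 2: "(\<Sum>u\<in>R. (q u - e * q' u) * h u) \<le> (\<Sum>u\<in>R. (q u - e * q' u) * T)"
    by (intro sum_mono mult_left_mono) (auto simp: R_def assms(4))
  have 3: "(\<Sum>u\<in>R. (q u - e * q' u) * T) = T * (sum q R - e * sum q' R)"
    by (simp add: sum_distrib_right[symmetric] sum_subtractf sum_distrib_left[symmetric] mult.commute)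
  have 4: "T * (sum q R - e * sum q' R) \<le> T * \<delta>"
    using assms(2)[OF fR(3)] assms(5) by (intro mult_left_mono) auto
  have 5: "(\<Sum>u\<in>R. q u * h u) = (\<Sum>u\<in>R. (q u - e * q' u) * h u) + (\<Sum>u\<in>R. e * q' u * h u)"
    by (simp add: sum.distrib[symmetric] algebra_simps)
  have A: "(\<Sum>u\<in>Os. q u * h u) \<le> T * \<delta> + (\<Sum>u\<in>R. e * q' u * h u) + (\<Sum>u\<in>Os - R. e * q' u * h u)"
    using split[of "\<lambda>u. q u * h u"] 1 2 3 4 5 by linarith
  have B: "(\<Sum>u\<in>R. e * q' u * h u) + (\<Sum>u\<in>Os - R. e * q' u * h u) = e * (\<Sum>u\<in>Os. q' u * h u)"
    using split[of "\<lambda>u. e * q' u * h u"] by (simp add: sum_distrib_left mult_ac)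
  show ?thesis using A B mult.commute[of \<delta> T] by linarith
qed


lemma dp_row:
  fixes q q' \<phi> :: "'u \<Rightarrow> real"
  assumes fin: "finite Os"
   and q0: "\<And>u. u\<in>Os \<Longrightarrow> 0 \<le> q u" and q0': "\<And>u. u\<in>Os \<Longrightarrow> 0 \<le> q' u"
   and s1: "sum q Os = 1" and s1': "sum q' Os = 1"
   and dp1: "\<And>R. R\<subseteq>Os \<Longrightarrow> sum q R \<le> exp \<epsilon> * sum q' R + \<delta>"
   and dp2: "\<And>R. R\<subseteq>Os \<Longrightarrow> sum q' R \<le> exp \<epsilon> * sum q R + \<delta>"
   and ep: "0 \<le> \<epsilon>" and dl: "0 \<le> \<delta>" and T0: "0 \<le> T" and bnd: "\<And>u. u\<in>Os \<Longrightarrow> \<bar>\<phi> u\<bar> \<le> A"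
  shows "(\<Sum>u\<in>Os. q u * \<phi> u) \<le> (\<Sum>u\<in>Os. q' u * \<phi> u) + (exp \<epsilon> - 1) * (\<Sum>u\<in>Os. q' u * \<bar>\<phi> u\<bar>)
           + 2 * \<delta> * T + 2 * max (A - T) 0"
proof -
  define hp where "hp u = min (max (\<phi> u) 0) T" for u
  define hm where "hm u = min (max (- \<phi> u) 0) T" for u
  define M where "M = max (A - T) 0"
  have M0: "0 \<le> M" by (simp add: M_def)
  have p1: "\<phi> u \<le> hp u - hm u + M" if "u \<in> Os" for u
    using bnd[OF that] T0 by (auto simp: hp_def hm_def M_def)
  have p2: "hp u - hm u \<le> \<phi> u + M" if "u \<in> Os" for u
    using bnd[OF that] T0 by (auto simp: hp_def hm_def M_def)
  have p3: "hp u + hm u \<le> \<bar>\<phi> u\<bar>" "0 \<le> hp u" "0 \<le> hm u" "hp u \<le> T" "hm u \<le> T" for u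
    using T0 by (auto simp: hp_def hm_def)
  have i: "(\<Sum>u\<in>Os. q u * \<phi> u) \<le> (\<Sum>u\<in>Os. q u * hp u) - (\<Sum>u\<in>Os. q u * hm u) + M"
  proof -
    have "(\<Sum>u\<in>Os. q u * \<phi> u) \<le> (\<Sum>u\<in>Os. q u * (hp u - hm u + M))"
      by (intro sum_mono mult_left_mono p1 q0)
    also have "\<dots> = (\<Sum>u\<in>Os. q u * hp u) - (\<Sum>u\<in>Os. q u * hm u) + M * sum q Os"
      by (simp add: algebra_simps sum.distrib sum_subtractf sum_distrib_left sum_distrib_right)
    finally show ?thesis using s1 by simp
  qed
  have ii: "(\<Sum>u\<in>Os. q u * hp u) \<le> exp \<epsilon> * (\<Sum>u\<in>Os. q' u * hp u) + \<delta> * T"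
    by (rule dp_fun[OF fin dp1]) (use p3 T0 in auto)
  have iii: "(\<Sum>u\<in>Os. q' u * hm u) \<le> exp \<epsilon> * (\<Sum>u\<in>Os. q u * hm u) + \<delta> * T"
    by (rule dp_fun[OF fin dp2]) (use p3 T0 in auto)
  define a where "a = (\<Sum>u\<in>Os. q' u * hp u)"
  define b where "b = (\<Sum>u\<in>Os. q' u * hm u)"
  define S where "S = (\<Sum>u\<in>Os. q' u * \<bar>\<phi> u\<bar>)"
  define e where "e = exp \<epsilon>"
  have a0: "0 \<le> a" unfolding a_def by (intro sum_nonneg mult_nonneg_nonneg q0' p3)
  have b0: "0 \<le> b" unfolding b_def by (intro sum_nonneg mult_nonneg_nonneg q0' p3)
  have abS: "a + b \<le> S"
  proof -
    have "a + b = (\<Sum>u\<in>Os. q' u * (hp u + hm u))" by (simp add: a_def b_def algebra_simps sum.distrib)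
    also have "\<dots> \<le> S" unfolding S_def by (intro sum_mono mult_left_mono q0' p3)
    finally show ?thesis .
  qed
  have amb: "a - b \<le> (\<Sum>u\<in>Os. q' u * \<phi> u) + M"
  proof -
    have "a - b = (\<Sum>u\<in>Os. q' u * (hp u - hm u))" by (simp add: a_def b_def algebra_simps sum_subtractf)
    also have "\<dots> \<le> (\<Sum>u\<in>Os. q' u * (\<phi> u + M))" by (intro sum_mono mult_left_mono q0' p2)
    also have "\<dots> = (\<Sum>u\<in>Os. q' u * \<phi> u) + M * sum q' Os"
      by (simp add: algebra_simps sum.distrib sum_distrib_left sum_distrib_right)
    finally show ?thesis using s1' by simp
  qed
  have e1: "1 \<le> e" using ep by (simp add: e_def)
  have epos: "0 < e" by (simp add: e_def)
  have iii': "e * (\<Sum>u\<in>Os. q u * hm u) \<ge> b - \<delta> * T" using iii by (simp add: b_def e_def)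
  have key: "e * a - (b - \<delta> * T) / e \<le> (a - b) + (e - 1) * (a + b) + \<delta> * T"
  proof -
    have "b - b / e \<le> (e - 1) * b"
    proof -
      have "b - b / e = b * (e - 1) / e" using epos by (simp add: field_simps)
      also have "\<dots> \<le> b * (e - 1)" 
      proof -
        have X: "0 \<le> b * (e - 1)" using e1 b0 by simp
        have "b * (e - 1) * 1 \<le> b * (e - 1) * e" using mult_left_mono[OF e1 X] .
        thus ?thesis using epos by (simp add: divide_le_eq)
      qed
      finally show ?thesis by (simp add: mult.commute)
    qed
    moreover have "\<delta> * T / e \<le> \<delta> * T"
    proof -
      have X: "0 \<le> \<delta> * T" using dl T0 by simp
      have "\<delta> * T * 1 \<le> \<delta> * T * e" using mult_left_mono[OF e1 X] .
      thus ?thesis using epos by (simp add: divide_le_eq)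
    qed
    moreover have "(b - \<delta> * T) / e = b / e - \<delta> * T / e" by (simp add: diff_divide_distrib)
    ultimately show ?thesis by (simp add: algebra_simps)
  qed
  have lower_hm: "(\<Sum>u\<in>Os. q u * hm u) \<ge> (b - \<delta> * T) / e"
    using iii' epos by (simp add: divide_le_eq mult.commute)
  have "(\<Sum>u\<in>Os. q u * \<phi> u) \<le> e * a + \<delta> * T - (b - \<delta> * T) / e + M"
    using i ii lower_hm by (simp add: a_def e_def)
  also have "\<dots> \<le> (a - b) + (e - 1) * (a + b) + 2 * \<delta> * T + M" using key by linarith
  also have "(e - 1) * (a + b) \<le> (e - 1) * S" using abS e1 by (intro mult_left_mono) auto
  hence "(a - b) + (e - 1) * (a + b) + 2 * \<delta> * T + M \<le> (\<Sum>u\<in>Os. q' u * \<phi> u) + M + (e - 1) * S + 2 * \<delta> * T + M"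
    using amb by linarith
  finally show ?thesis by (simp add: S_def e_def M_def)
qed


definition Pf :: "real \<Rightarrow> real" where "Pf t = 3*t^2 - 2*t^3"
definition pk :: "nat \<Rightarrow> nat \<Rightarrow> real" where "pk K k = Pf (real k / real K)"
definition bp :: "real \<Rightarrow> bool \<Rightarrow> real" where "bp p b = (if b then p else 1 - p)"
definition rr :: "nat \<Rightarrow> nat \<Rightarrow> bool \<Rightarrow> real" where "rr K k b = bp (pk K (Suc k)) b / bp (pk K k) b"
definition mu :: "nat \<Rightarrow> nat \<Rightarrow> real" where
  "mu K k = (if k = 0 \<or> k = K then 9/20 else 1/(10*(real K - 1)))"
definition BV :: "nat \<Rightarrow> (nat \<Rightarrow> bool) set" where "BV n = PiE {..<n} (\<lambda>_. UNIV)"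
definition piv :: "nat \<Rightarrow> real \<Rightarrow> (nat \<Rightarrow> bool) \<Rightarrow> real" where "piv n p x = (\<Prod>i<n. bp p (x i))"
definition Oc :: "nat \<Rightarrow> nat \<Rightarrow> (nat \<times> (nat \<Rightarrow> bool)) set" where "Oc n K = {0..K} \<times> BV n"
definition Dc :: "nat \<Rightarrow> nat \<Rightarrow> nat \<times> (nat \<Rightarrow> bool) \<Rightarrow> real" where
  "Dc n K s = mu K (fst s) * piv n (pk K (fst s)) (snd s)"
definition intr :: "nat \<Rightarrow> nat \<Rightarrow> bool" where "intr K k \<longleftrightarrow> 1 \<le> k \<and> k + 2 \<le> K"
definition cc :: "nat \<Rightarrow> nat \<Rightarrow> nat \<times> (nat \<Rightarrow> bool) \<Rightarrow> real" where
  "cc K i s = (if intr K (fst s) then (\<Prod>i'<i. rr K (fst s) (snd s i')) * (rr K (fst s) (snd s i) - 1) else 0)"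
definition tot :: "nat \<Rightarrow> nat \<Rightarrow> nat \<times> (nat \<Rightarrow> bool) \<Rightarrow> real" where
  "tot K n s = (if intr K (fst s) then (\<Prod>i<n. rr K (fst s) (snd s i)) - 1 else 0)"

lemma Pf_pos: "0 < t \<Longrightarrow> t < 1 \<Longrightarrow> 0 < Pf t \<and> Pf t < 1"
proof -
  assume t: "0 < t" "t < 1"
  have "Pf t = t^2 * (3 - 2*t)" by (simp add: Pf_def power2_eq_square power3_eq_cube algebra_simps)
  moreover have "1 - Pf t = (1-t)^2 * (1 + 2*t)" by (simp add: Pf_def power2_eq_square power3_eq_cube algebra_simps)
  moreover have "0 < t^2 * (3 - 2*t)" using t by (intro mult_pos_pos) auto
  moreover have "0 < (1-t)^2 * (1 + 2*t)" using t by (intro mult_pos_pos) auto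
  ultimately show ?thesis by linarith
qed

lemma pk_0[simp]: "pk K 0 = 0" by (simp add: pk_def Pf_def)
lemma pk_K[simp]: "0 < K \<Longrightarrow> pk K K = 1" by (simp add: pk_def Pf_def)

lemma pk_in: "0 < k \<Longrightarrow> k < K \<Longrightarrow> 0 < pk K k \<and> pk K k < 1"
  unfolding pk_def by (rule Pf_pos) (auto simp: field_simps)

lemma pk_01: "k \<le> K \<Longrightarrow> 0 \<le> pk K k \<and> pk K k \<le> 1"
proof (cases "k = 0")
  case True then show ?thesis by simp
next
  case False
  assume kK: "k \<le> K"
  show ?thesis
  proof (cases "k = K")
    case True then show ?thesis using False by simp
  next
    case False2: False
    then show ?thesis using pk_in[of k K] kK False by auto
  qed
qed

lemma bp_sum: "bp p True + bp p False = 1" by (simp add: bp_def)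
lemma sum_bool: "(\<Sum>b\<in>(UNIV::bool set). f b) = f True + f False"
  by (simp add: UNIV_bool add.commute)
lemma bp_nonneg: "0 \<le> p \<Longrightarrow> p \<le> 1 \<Longrightarrow> 0 \<le> bp p b" by (simp add: bp_def)

lemma finite_BV[simp]: "finite (BV n)" by (simp add: BV_def finite_PiE)
lemma finite_Oc[simp]: "finite (Oc n K)" by (simp add: Oc_def)

lemma sum_piv: "(\<Sum>x\<in>BV n. piv n p x) = 1"
  using prod_sum_PiE[of "{..<n}" "\<lambda>_. UNIV" "\<lambda>_ b. bp p b"]
  by (simp add: BV_def piv_def sum_bool bp_sum)

lemma piv_nonneg: "0 \<le> p \<Longrightarrow> p \<le> 1 \<Longrightarrow> 0 \<le> piv n p x"
  unfolding piv_def by (intro prod_nonneg) (simp add: bp_nonneg)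

lemma sum_mu: assumes "2 \<le> K" shows "(\<Sum>k\<in>{0..K}. mu K k) = 1"
proof -
  have split: "{0..K} = {0, K} \<union> {1..K-1}" using assms by auto
  have "(\<Sum>k\<in>{0..K}. mu K k) = (\<Sum>k\<in>{0, K}. mu K k) + (\<Sum>k\<in>{1..K-1}. mu K k)"
    unfolding split by (rule sum.union_disjoint) (use assms in auto)
  also have "(\<Sum>k\<in>{0, K}. mu K k) = 9/10" using assms by (simp add: mu_def)
  also have "(\<Sum>k\<in>{1..K-1}. mu K k) = (\<Sum>k\<in>{1..K-1}. 1/(10*(real K - 1)))"
    by (rule sum.cong) (auto simp: mu_def)
  also have "\<dots> = real (K - 1) / (10*(real K - 1))" by simp
  also have "\<dots> = 1/10" using assms by (simp add: of_nat_diff)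
  finally show ?thesis by simp
qed

lemma mu_nonneg: "2 \<le> K \<Longrightarrow> 0 \<le> mu K k" by (simp add: mu_def)

lemma sum_Dc: assumes "2 \<le> K" shows "(\<Sum>s\<in>Oc n K. Dc n K s) = 1"
proof -
  have "(\<Sum>s\<in>Oc n K. Dc n K s) = (\<Sum>k\<in>{0..K}. \<Sum>x\<in>BV n. mu K k * piv n (pk K k) x)"
    unfolding Oc_def Dc_def by (simp add: sum.cartesian_product split_def)
  also have "\<dots> = (\<Sum>k\<in>{0..K}. mu K k)" by (simp add: sum_distrib_left[symmetric] sum_piv)
  finally show ?thesis using sum_mu[OF assms] by simp
qed

lemma Dc_nonneg: assumes "2 \<le> K" "s \<in> Oc n K" shows "0 \<le> Dc n K s"
  using assms pk_01[of "fst s" K] unfolding Dc_def Oc_def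
  by (intro mult_nonneg_nonneg mu_nonneg piv_nonneg) auto

lemma col_split_zero:
  assumes "i < n" and z: "(\<Sum>b\<in>UNIV. bp p b * f b) = 0"
  shows "(\<Sum>x\<in>BV n. piv n p x * (f (x i) * G (x(i := False)))) = 0"
proof -
  have "(\<Sum>x\<in>BV n. piv n p x * (f (x i) * G (x(i := False)))) =
    (\<Sum>y\<in>PiE ({..<n} - {i}) (\<lambda>_. UNIV). \<Sum>b\<in>UNIV. piv n p (y(i:=b)) * (f b * G (y(i := False))))"
    unfolding BV_def using assms by (subst sum_PiE_split[of _ i]) auto
  also have "\<dots> = (\<Sum>y\<in>PiE ({..<n} - {i}) (\<lambda>_. UNIV). (\<Prod>i'\<in>{..<n} - {i}. bp p (y i')) * G (y(i := False)) * (\<Sum>b\<in>UNIV. bp p b * f b))"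
  proof (rule sum.cong)
    fix y
    show "(\<Sum>b\<in>UNIV. piv n p (y(i:=b)) * (f b * G (y(i := False)))) =
      (\<Prod>i'\<in>{..<n} - {i}. bp p (y i')) * G (y(i := False)) * (\<Sum>b\<in>UNIV. bp p b * f b)"
    proof -
      have eq: "piv n p (y(i:=b)) = bp p b * (\<Prod>i'\<in>{..<n} - {i}. bp p (y i'))" for b
        unfolding piv_def by (rule prod_upd_split) (use assms in auto)
      show ?thesis by (simp add: eq sum_bool algebra_simps)
    qed
  qed simp
  also have "\<dots> = 0" using z by simp
  finally show ?thesis .
qed

lemma bp_rr: assumes "0 < k" "Suc k < K" shows "bp (pk K k) b * rr K k b = bp (pk K (Suc k)) b"
  using pk_in[of k K] assms by (cases b) (auto simp: rr_def bp_def)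

lemma rr_mean: assumes "0 < k" "Suc k < K" shows "(\<Sum>b\<in>UNIV. bp (pk K k) b * (rr K k b - 1)) = 0"
  using bp_rr[OF assms, of True] bp_rr[OF assms, of False]
  by (simp add: sum_bool algebra_simps bp_def)


lemma step_bounds:
  fixes t h :: real
  assumes h: "0 < h" "h \<le> t" "t + 2*h \<le> 1"
  shows "0 \<le> Pf (t+h) - Pf t \<and> Pf (t+h) - Pf t \<le> 12*h*(t*(1-t))"
proof -
  have eq: "Pf (t+h) - Pf t = h * (6*(t*(1-t)) + h*(3 - 6*t - 2*h))"
    by (simp add: Pf_def power2_eq_square power3_eq_cube algebra_simps)
  have hh: "h \<le> 2*(t*(1-t))"
  proof (cases "t \<le> 1/2")
    case True
    have "2*(t*(1-t)) - t = t*(1-2*t)" by (simp add: algebra_simps)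
    moreover have "0 \<le> t*(1-2*t)" using True h by (intro mult_nonneg_nonneg) auto
    ultimately show ?thesis using h by linarith
  next
    case False
    have "2*(t*(1-t)) - (1-t) = (1-t)*(2*t-1)" by (simp add: algebra_simps)
    moreover have "0 \<le> (1-t)*(2*t-1)" using False h by (intro mult_nonneg_nonneg) auto
    ultimately show ?thesis using h by linarith
  qed
  have b1: "h*(3 - 6*t - 2*h) \<le> 3*h" using h by (simp add: algebra_simps)
  have b2: "h*(3 - 6*t - 2*h) \<ge> -3*h"
  proof -
    have "3 - 6*t - 2*h \<ge> -3" using h by linarith
    then show ?thesis using h mult_left_mono[of "-3" "3 - 6*t - 2*h" h] by simp
  qed
  have "0 \<le> 6*(t*(1-t)) + h*(3 - 6*t - 2*h)" using b2 hh by linarith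
  moreover have "6*(t*(1-t)) + h*(3 - 6*t - 2*h) \<le> 12*(t*(1-t))" using b1 hh by linarith
  ultimately show ?thesis unfolding eq using h
    by (auto intro: mult_nonneg_nonneg simp: mult_left_mono mult.assoc)
qed

lemma var_bound:
  fixes t :: real
  assumes "0 \<le> t" "t \<le> 1"
  shows "3*(t*(1-t))^2 \<le> Pf t * (1 - Pf t)"
proof -
  have "Pf t * (1 - Pf t) = (t*(1-t))^2 * ((3 - 2*t)*(1+2*t))"
    by (simp add: Pf_def power2_eq_square power3_eq_cube algebra_simps)
  moreover have "(3 - 2*t)*(1+2*t) \<ge> 3" using assms
  proof -
    have "(3 - 2*t)*(1+2*t) = 3 + 4*(t*(1-t))" by (simp add: algebra_simps)
    moreover have "0 \<le> t*(1-t)" using assms by simp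
    ultimately show ?thesis by linarith
  qed
  ultimately show ?thesis using mult_left_mono[of 3 "(3 - 2*t)*(1+2*t)" "(t*(1-t))^2"]
    by (simp add: mult.commute)
qed

definition chi2 :: "nat \<Rightarrow> nat \<Rightarrow> real" where
  "chi2 K k = (\<Sum>b\<in>UNIV. bp (pk K k) b * (rr K k b - 1)^2)"

lemma chi2_bound:
  assumes "intr K k"
  shows "chi2 K k \<le> 48 / (real K)^2"
proof -
  define t where "t = real k / real K"
  define h where "h = 1 / real K"
  have K0: "0 < real K" using assms by (simp add: intr_def)
  have th: "t + h = real (Suc k) / real K" by (simp add: t_def h_def add_divide_distrib)
  have hpos: "0 < h" "h \<le> t" "t + 2*h \<le> 1" using assms K0
    by (auto simp: t_def h_def intr_def field_simps)
  define p where "p = pk K k"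
  define q where "q = pk K (Suc k)"
  have pq1: "p = Pf t" by (simp add: p_def pk_def t_def)
  have pq2: "q = Pf (t+h)" unfolding th by (simp add: q_def pk_def)
  note pq = pq1 pq2
  have p01: "0 < p" "p < 1" using pk_in[of k K] assms by (auto simp: p_def intr_def)
  have sb: "0 \<le> q - p \<and> q - p \<le> 12*h*(t*(1-t))" using step_bounds[OF hpos] pq by simp
  have vb: "3*(t*(1-t))^2 \<le> p * (1 - p)" using var_bound[of t] hpos pq by simp
  have c: "chi2 K k = (q-p)^2 / (p*(1-p))"
  proof -
    have "chi2 K k = p * ((q/p) - 1)^2 + (1-p) * ((1-q)/(1-p) - 1)^2"
      by (simp add: chi2_def sum_bool bp_def rr_def p_def q_def)
    also have "(q/p) - 1 = (q - p)/p" using p01 by (simp add: field_simps)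
    also have "(1-q)/(1-p) - 1 = (p - q)/(1-p)" using p01 by (simp add: field_simps)
    also have "p * ((q - p)/p)^2 = (q-p)^2/p" using p01 by (simp add: power2_eq_square)
    also have "(1-p) * ((p - q)/(1-p))^2 = (q-p)^2/(1-p)"
    proof -
      have ne: "1 - p \<noteq> 0" using p01 by simp
      have "(1-p) * ((p - q)/(1-p))^2 = (1-p) * ((p-q)^2/(1-p)^2)" by (simp add: power_divide)
      also have "\<dots> = (p-q)^2/(1-p)" using ne by (simp add: power2_eq_square)
      also have "(p-q)^2 = (q-p)^2" by (simp add: power2_commute)
      finally show ?thesis .
    qed
    also have "(q-p)^2/p + (q-p)^2/(1-p) = (q-p)^2 / (p*(1-p))" using p01 by (simp add: field_simps)
    finally show ?thesis .
  qed
  have "(q-p)^2 \<le> (12*h*(t*(1-t)))^2" using sb by (intro power_mono) auto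
  also have "\<dots> = 48*h^2 * (3*(t*(1-t))^2)" by (simp add: power2_eq_square)
  also have "\<dots> \<le> 48*h^2 * (p*(1-p))" using vb by (intro mult_left_mono) auto
  finally have "(q-p)^2 / (p*(1-p)) \<le> 48*h^2" using p01 by (simp add: divide_le_eq)
  then show ?thesis using c by (simp add: h_def power2_eq_square)
qed

lemma chi2_nonneg: "intr K k \<Longrightarrow> 0 \<le> chi2 K k"
  unfolding chi2_def using pk_01[of k K] by (intro sum_nonneg mult_nonneg_nonneg bp_nonneg) (auto simp: intr_def)

lemma rr_sq_mean:
  assumes "intr K k"
  shows "(\<Sum>b\<in>UNIV. bp (pk K k) b * (rr K k b)^2) = 1 + chi2 K k"
proof -
  have a: "0 < k" "Suc k < K" using assms by (auto simp: intr_def)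
  have "(\<Sum>b\<in>UNIV. bp (pk K k) b * (rr K k b)^2) =
        chi2 K k + 2 * (\<Sum>b\<in>UNIV. bp (pk K k) b * rr K k b) - (\<Sum>b\<in>UNIV. bp (pk K k) b)"
    by (simp add: chi2_def sum_bool power2_eq_square algebra_simps)
  also have "(\<Sum>b\<in>UNIV. bp (pk K k) b * rr K k b) = 1"
    using bp_rr[OF a] by (simp add: sum_bool bp_sum)
  finally show ?thesis by (simp add: sum_bool bp_sum)
qed

lemma prod_if_split:
  fixes A B :: "nat \<Rightarrow> real"
  assumes "i < n"
  shows "(\<Prod>i'<n. if i' < i then A i' else if i' = i then B i' else 1) = (\<Prod>i'<i. A i') * B i"
  using assms
proof (induction n)
  case 0 then show ?case by simp
next
  case (Suc m)
  show ?case
  proof (cases "i < m")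
    case True
    then show ?thesis using Suc by simp
  next
    case False
    then have "i = m" using Suc by simp
    moreover have "(\<Prod>i'<m. if i' < m then A i' else if i' = m then B i' else 1) = (\<Prod>i'<m. A i')"
      by (rule prod.cong) auto
    ultimately show ?thesis by simp
  qed
qed

lemma second_moment_col:
  assumes "intr K k" "i < n"
  shows "(\<Sum>x\<in>BV n. piv n (pk K k) x * (cc K i (k, x))^2) = (1 + chi2 K k)^i * chi2 K k"
proof -
  define g where "g i' b = bp (pk K k) b * (if i' < i then (rr K k b)^2 else if i' = i then (rr K k b - 1)^2 else 1)" for i' b
  have "(\<Prod>i'<n. \<Sum>b\<in>UNIV. g i' b) = (\<Sum>x\<in>BV n. \<Prod>i'<n. g i' (x i'))"
    unfolding BV_def by (rule prod_sum_PiE) auto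
  moreover have "(\<Prod>i'<n. \<Sum>b\<in>UNIV. g i' b) = (1 + chi2 K k)^i * chi2 K k"
  proof -
    have "(\<Prod>i'<n. \<Sum>b\<in>UNIV. g i' b) = (\<Prod>i'<n. if i' < i then 1 + chi2 K k else if i' = i then chi2 K k else 1)"
    proof (rule prod.cong)
      fix i' assume "i' \<in> {..<n}"
      show "(\<Sum>b\<in>UNIV. g i' b) = (if i' < i then 1 + chi2 K k else if i' = i then chi2 K k else 1)"
      proof (cases "i' < i")
        case True then show ?thesis using rr_sq_mean[OF assms(1)] by (simp add: g_def)
      next
        case False
        then show ?thesis by (cases "i' = i") (simp_all add: g_def chi2_def sum_bool bp_sum)
      qed
    qed simp
    also have "\<dots> = (\<Prod>i'<i. 1 + chi2 K k) * chi2 K k" by (rule prod_if_split[OF assms(2)])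
    finally show ?thesis by simp
  qed
  moreover have "(\<Prod>i'<n. g i' (x i')) = piv n (pk K k) x * (cc K i (k, x))^2" for x
  proof -
    have "(\<Prod>i'<n. g i' (x i')) = piv n (pk K k) x * (\<Prod>i'<n. if i' < i then (rr K k (x i'))^2 else if i' = i then (rr K k (x i') - 1)^2 else 1)"
      unfolding g_def piv_def by (simp add: prod.distrib)
    also have "(\<Prod>i'<n. if i' < i then (rr K k (x i'))^2 else if i' = i then (rr K k (x i') - 1)^2 else 1)
        = (\<Prod>i'<i. (rr K k (x i'))^2) * (rr K k (x i) - 1)^2"
      by (rule prod_if_split[OF assms(2)])
    also have "\<dots> = (cc K i (k, x))^2" using assms(1) by (simp add: cc_def power_mult_distrib prod_power_distrib)
    finally show ?thesis .
  qed
  ultimately show ?thesis by simp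
qed


definition ones :: "nat \<Rightarrow> nat \<Rightarrow> bool" where "ones n = restrict (\<lambda>_. True) {..<n}"
definition zeros :: "nat \<Rightarrow> nat \<Rightarrow> bool" where "zeros n = restrict (\<lambda>_. False) {..<n}"

lemma ones_BV[simp]: "ones n \<in> BV n" by (simp add: ones_def BV_def)
lemma zeros_BV[simp]: "zeros n \<in> BV n" by (simp add: zeros_def BV_def)

lemma BV_eq_ones: "x \<in> BV n \<Longrightarrow> (\<forall>i<n. x i) \<longleftrightarrow> x = ones n"
  by (auto simp: BV_def ones_def PiE_def extensional_def fun_eq_iff)
lemma BV_eq_zeros: "x \<in> BV n \<Longrightarrow> (\<forall>i<n. \<not> x i) \<longleftrightarrow> x = zeros n"
  by (auto simp: BV_def zeros_def PiE_def extensional_def fun_eq_iff)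

lemma piv_1: "x \<in> BV n \<Longrightarrow> piv n 1 x = (if x = ones n then 1 else 0)"
proof -
  assume x: "x \<in> BV n"
  have "piv n 1 x = (\<Prod>i<n. if x i then 1 else 0)" unfolding piv_def by (rule prod.cong) (auto simp: bp_def)
  also have "\<dots> = (if \<forall>i<n. x i then 1 else 0)"
    by (auto simp: prod_zero_iff)
  finally show ?thesis using BV_eq_ones[OF x] by simp
qed

lemma piv_0: "x \<in> BV n \<Longrightarrow> piv n 0 x = (if x = zeros n then 1 else 0)"
proof -
  assume x: "x \<in> BV n"
  have "piv n 0 x = (\<Prod>i<n. if x i then 0 else 1)" unfolding piv_def by (rule prod.cong) (auto simp: bp_def)
  also have "\<dots> = (if \<forall>i<n. \<not> x i then 1 else 0)"
    by (auto simp: prod_zero_iff)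
  finally show ?thesis using BV_eq_zeros[OF x] by simp
qed

lemma sum_piv_1: "(\<Sum>x\<in>BV n. piv n 1 x * G x) = G (ones n)"
proof -
  have "(\<Sum>x\<in>BV n. piv n 1 x * G x) = (\<Sum>x\<in>BV n. if x = ones n then G x else 0)"
    by (rule sum.cong) (auto simp: piv_1)
  also have "\<dots> = G (ones n)" by (simp add: sum.delta')
  finally show ?thesis .
qed

lemma sum_piv_0: "(\<Sum>x\<in>BV n. piv n 0 x * G x) = G (zeros n)"
proof -
  have "(\<Sum>x\<in>BV n. piv n 0 x * G x) = (\<Sum>x\<in>BV n. if x = zeros n then G x else 0)"
    by (rule sum.cong) (auto simp: piv_0)
  also have "\<dots> = G (zeros n)" by (simp add: sum.delta')
  finally show ?thesis .
qed

lemma piv_zeros: "piv n p (zeros n) = (1-p)^n" by (simp add: piv_def bp_def zeros_def)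
lemma piv_ones: "piv n p (ones n) = p^n" by (simp add: piv_def bp_def ones_def)

lemma h_upper:
  assumes "0 \<le> p" "p \<le> 1" "\<And>x. x \<in> BV n \<Longrightarrow> 0 \<le> G x \<and> G x \<le> 1"
  shows "(\<Sum>x\<in>BV n. piv n p x * G x) \<le> G (zeros n) + real n * p"
proof -
  have split: "(\<Sum>x\<in>BV n. piv n p x * G x) = piv n p (zeros n) * G (zeros n) + (\<Sum>x\<in>BV n - {zeros n}. piv n p x * G x)"
    by (subst sum.remove[of _ "zeros n"]) auto
  have "(\<Sum>x\<in>BV n - {zeros n}. piv n p x * G x) \<le> (\<Sum>x\<in>BV n - {zeros n}. piv n p x)"
    using assms by (intro sum_mono) (auto intro: mult_right_le_one_le piv_nonneg)
  also have "\<dots> = 1 - piv n p (zeros n)" using sum_piv[of n p] sum.remove[of "BV n" "zeros n" "piv n p"] by simp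
  finally have A: "(\<Sum>x\<in>BV n - {zeros n}. piv n p x * G x) \<le> 1 - (1-p)^n" by (simp add: piv_zeros)
  have B: "(1-p)^n * G (zeros n) \<le> G (zeros n)"
    using assms(1,2) assms(3)[of "zeros n"] by (intro mult_left_le_one_le) (auto simp: power_le_one)
  have C: "1 + real n * (-p) \<le> (1 + (-p))^n" using assms by (intro Bernoulli_inequality) simp
  show ?thesis using split A B C by (simp add: piv_zeros)
qed

lemma h_lower:
  assumes "0 \<le> p" "p \<le> 1" "\<And>x. x \<in> BV n \<Longrightarrow> 0 \<le> G x \<and> G x \<le> 1"
  shows "(\<Sum>x\<in>BV n. piv n p x * G x) \<ge> G (ones n) - real n * (1 - p)"
proof -
  have split: "(\<Sum>x\<in>BV n. piv n p x * G x) = piv n p (ones n) * G (ones n) + (\<Sum>x\<in>BV n - {ones n}. piv n p x * G x)"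
    by (subst sum.remove[of _ "ones n"]) auto
  have A: "0 \<le> (\<Sum>x\<in>BV n - {ones n}. piv n p x * G x)"
    using assms by (intro sum_nonneg mult_nonneg_nonneg piv_nonneg) auto
  have C: "1 + real n * (p - 1) \<le> (1 + (p - 1))^n" using assms by (intro Bernoulli_inequality) simp
  have G1: "G (ones n) \<le> 1" "0 \<le> G (ones n)" using assms(3)[of "ones n"] by auto
  have "p^n * G (ones n) \<ge> G (ones n) - (1 - p^n)"
  proof -
    have "G (ones n) - p^n * G (ones n) = (1 - p^n) * G (ones n)" by (simp add: algebra_simps)
    also have "\<dots> \<le> 1 - p^n" using G1 assms by (intro mult_left_le) (auto simp: power_le_one)
    finally show ?thesis by simp
  qed
  then show ?thesis using split A C by (simp add: piv_ones algebra_simps)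
qed

lemma Pf_sym: "Pf (1 - u) = 1 - Pf u"
  by (simp add: Pf_def power2_eq_square power3_eq_cube algebra_simps)

lemma pk_sym: assumes "0 < K" shows "1 - pk K (K - 1) = pk K 1"
proof -
  have "real (K - 1) / real K = 1 - 1 / real K" using assms by (simp add: of_nat_diff field_simps)
  then have "pk K (K - 1) = Pf (1 - 1 / real K)" by (simp add: pk_def)
  then show ?thesis by (simp add: Pf_sym pk_def)
qed

lemma pk_1_bound: assumes "0 < K" shows "pk K 1 \<le> 3 / (real K)^2"
proof -
  have "pk K 1 = 3 / (real K)^2 - 2 / (real K)^3" by (simp add: pk_def Pf_def power_divide)
  moreover have "0 \<le> 2 / (real K)^3" by simp
  ultimately show ?thesis by linarith
qed

lemma sum_intr:
  fixes f :: "nat \<Rightarrow> real"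
  shows "(\<Sum>k\<in>{0..K}. if intr K k then f k else 0) = (\<Sum>k\<in>{1..K-2}. f k)"
proof -
  have "(\<Sum>k\<in>{0..K}. if intr K k then f k else 0) = (\<Sum>k\<in>{k\<in>{0..K}. intr K k}. f k)"
    by (rule sum.inter_filter[symmetric]) simp
  also have "{k\<in>{0..K}. intr K k} = {1..K-2}" by (auto simp: intr_def)
  finally show ?thesis .
qed

lemma mu_intr: "intr K k \<Longrightarrow> mu K k = 1/(10*(real K - 1))"
  by (simp add: mu_def intr_def)

definition nu :: "nat \<Rightarrow> real" where "nu K = 1/(10*(real K - 1))"

lemma pow_le_2:
  assumes "0 \<le> x" "x \<le> 48 / (real K)^2" "K = 10 * n" "i < n"
  shows "(1 + x)^i \<le> 2"
proof -
  have n1: "1 \<le> n" using assms by simp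
  have "(1 + x)^i \<le> (exp x)^i" using assms by (intro power_mono) (auto simp: exp_ge_add_one_self add_increasing)
  also have "\<dots> = exp (real i * x)" by (simp add: exp_of_nat_mult)
  also have "real i * x \<le> 1/2"
  proof -
    have "real i * x \<le> real n * (48 / (real K)^2)" using assms by (intro mult_mono) auto
    also have "\<dots> = 48 / (100 * real n)" using n1 by (simp add: assms(3) power2_eq_square)
    also have "\<dots> \<le> 1/2" using n1 by (simp add: field_simps)
    finally show ?thesis .
  qed
  hence "exp (real i * x) \<le> exp (1/2)" by simp
  also have "exp (1/2::real) \<le> 2"
  proof -
    have "(exp (1/2::real))^2 = exp 1" by (simp add: exp_double[symmetric] power2_eq_square exp_add[symmetric])
    also have "\<dots> \<le> 2^2" using exp_le by simp
    finally show ?thesis by (rule power2_le_imp_le) simp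
  qed
  finally show ?thesis .
qed

lemma m2_bound:
  assumes "K = 10 * n" "1 \<le> n" "i < n"
  shows "(\<Sum>s\<in>Oc n K. Dc n K s * (cc K i s)^2) \<le> 96 * nu K / real K"
proof -
  have "(\<Sum>s\<in>Oc n K. Dc n K s * (cc K i s)^2) = (\<Sum>k\<in>{0..K}. \<Sum>x\<in>BV n. mu K k * (piv n (pk K k) x * (cc K i (k,x))^2))"
    unfolding Oc_def Dc_def by (simp add: sum.cartesian_product split_def mult.assoc)
  also have "\<dots> = (\<Sum>k\<in>{0..K}. if intr K k then nu K * ((1 + chi2 K k)^i * chi2 K k) else 0)"
  proof (rule sum.cong)
    fix k assume "k \<in> {0..K}"
    show "(\<Sum>x\<in>BV n. mu K k * (piv n (pk K k) x * (cc K i (k,x))^2)) = (if intr K k then nu K * ((1 + chi2 K k)^i * chi2 K k) else 0)"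
    proof (cases "intr K k")
      case True
      have "(\<Sum>x\<in>BV n. mu K k * (piv n (pk K k) x * (cc K i (k,x))^2)) = mu K k * (\<Sum>x\<in>BV n. piv n (pk K k) x * (cc K i (k,x))^2)"
        by (simp add: sum_distrib_left)
      then show ?thesis using second_moment_col[OF True assms(3)] True
        by (simp add: mu_intr nu_def)
    next
      case False then show ?thesis by (simp add: cc_def)
    qed
  qed simp
  also have "\<dots> = (\<Sum>k\<in>{1..K-2}. nu K * ((1 + chi2 K k)^i * chi2 K k))" by (rule sum_intr)
  also have "\<dots> \<le> (\<Sum>k\<in>{1..K-2}. nu K * (2 * (48 / (real K)^2)))"
  proof (rule sum_mono)
    fix k assume "k \<in> {1..K-2}"
    then have ik: "intr K k" using assms by (auto simp: intr_def)
    have "(1 + chi2 K k)^i * chi2 K k \<le> 2 * (48 / (real K)^2)"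
      using pow_le_2[OF chi2_nonneg[OF ik] chi2_bound[OF ik] assms(1,3)] chi2_bound[OF ik] chi2_nonneg[OF ik]
      by (intro mult_mono) auto
    then show "nu K * ((1 + chi2 K k)^i * chi2 K k) \<le> nu K * (2 * (48 / (real K)^2))"
      using assms by (intro mult_left_mono) (auto simp: nu_def)
  qed
  also have "\<dots> = real (K - 2) * (nu K * (96 / (real K)^2))" by simp
  also have "\<dots> \<le> real K * (nu K * (96 / (real K)^2))"
    using assms by (intro mult_right_mono) (auto simp: nu_def)
  also have "\<dots> = 96 * nu K / real K" using assms by (simp add: power2_eq_square)
  finally show ?thesis .
qed


lemma piv_rr: assumes "intr K k"
  shows "piv n (pk K k) x * (\<Prod>i<n. rr K k (x i)) = piv n (pk K (Suc k)) x"
proof -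
  have a: "0 < k" "Suc k < K" using assms by (auto simp: intr_def)
  show ?thesis unfolding piv_def prod.distrib[symmetric] using bp_rr[OF a] by simp
qed

lemma signal_col:
  assumes "K = 10 * n" "1 \<le> n" and G: "\<And>x. x \<in> BV n \<Longrightarrow> 0 \<le> G x \<and> G x \<le> 1"
  shows "(\<Sum>s\<in>Oc n K. Dc n K s * (tot K n s * G (snd s))) \<ge> nu K * (G (ones n) - G (zeros n) - 2 * real n * pk K 1)"
proof -
  define h where "h k = (\<Sum>x\<in>BV n. piv n (pk K k) x * G x)" for k
  have "(\<Sum>s\<in>Oc n K. Dc n K s * (tot K n s * G (snd s))) = (\<Sum>k\<in>{0..K}. \<Sum>x\<in>BV n. mu K k * (piv n (pk K k) x * (tot K n (k,x) * G x)))"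
    unfolding Oc_def Dc_def by (simp add: sum.cartesian_product split_def mult.assoc)
  also have "\<dots> = (\<Sum>k\<in>{0..K}. if intr K k then nu K * (h (Suc k) - h k) else 0)"
  proof (rule sum.cong)
    fix k assume "k \<in> {0..K}"
    show "(\<Sum>x\<in>BV n. mu K k * (piv n (pk K k) x * (tot K n (k,x) * G x))) = (if intr K k then nu K * (h (Suc k) - h k) else 0)"
    proof (cases "intr K k")
      case True
      have "(\<Sum>x\<in>BV n. mu K k * (piv n (pk K k) x * (tot K n (k,x) * G x)))
          = mu K k * (\<Sum>x\<in>BV n. piv n (pk K k) x * (\<Prod>i<n. rr K k (x i)) * G x - piv n (pk K k) x * G x)"
        using True by (simp add: sum_distrib_left tot_def algebra_simps)
      also have "\<dots> = mu K k * (h (Suc k) - h k)"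
        by (simp add: piv_rr[OF True] h_def sum_subtractf)
      finally show ?thesis using True by (simp add: mu_intr nu_def)
    next
      case False then show ?thesis by (simp add: tot_def)
    qed
  qed simp
  also have "\<dots> = (\<Sum>k\<in>{1..K-2}. nu K * (h (Suc k) - h k))" by (rule sum_intr)
  also have "\<dots> = nu K * (h (Suc (K-2)) - h 1)"
    using assms by (simp add: sum_distrib_left[symmetric] sum_Suc_diff)
  also have "Suc (K - 2) = K - 1" using assms by simp
  finally have eq: "(\<Sum>s\<in>Oc n K. Dc n K s * (tot K n s * G (snd s))) = nu K * (h (K - 1) - h 1)" .
  have K0: "0 < K" using assms by simp
  have hK: "h (K - 1) \<ge> G (ones n) - real n * pk K 1"
    using h_lower[of "pk K (K-1)" n G] pk_01[of "K-1" K] G pk_sym[OF K0] by (simp add: h_def)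
  have h1: "h 1 \<le> G (zeros n) + real n * pk K 1"
    using h_upper[of "pk K 1" n G] pk_01[of 1 K] G assms by (simp add: h_def)
  have nu0: "0 \<le> nu K" using assms by (simp add: nu_def)
  have "nu K * (G (ones n) - G (zeros n) - 2 * real n * pk K 1) \<le> nu K * (h (K - 1) - h 1)"
    using hK h1 nu0 by (intro mult_left_mono) auto
  then show ?thesis using eq by simp
qed

lemma endpoint_K:
  assumes "2 \<le> K"
  shows "(\<Sum>s\<in>Oc n K. Dc n K s * ((if fst s = K then 1 else 0) * G (snd s))) = 9/20 * G (ones n)"
proof -
  have "(\<Sum>s\<in>Oc n K. Dc n K s * ((if fst s = K then 1 else 0) * G (snd s))) =
     (\<Sum>k\<in>{0..K}. \<Sum>x\<in>BV n. mu K k * (piv n (pk K k) x * ((if k = K then 1 else 0) * G x)))"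
    unfolding Oc_def Dc_def by (simp add: sum.cartesian_product split_def mult.assoc)
  also have "\<dots> = (\<Sum>k\<in>{0..K}. if k = K then mu K K * (\<Sum>x\<in>BV n. piv n 1 x * G x) else 0)"
    by (rule sum.cong) (use assms in \<open>auto simp: sum_distrib_left\<close>)
  also have "\<dots> = 9/20 * G (ones n)" by (simp add: sum_piv_1 mu_def)
  finally show ?thesis .
qed

lemma endpoint_0:
  assumes "2 \<le> K"
  shows "(\<Sum>s\<in>Oc n K. Dc n K s * ((if fst s = 0 then 1 else 0) * G (snd s))) = 9/20 * G (zeros n)"
proof -
  have "(\<Sum>s\<in>Oc n K. Dc n K s * ((if fst s = 0 then 1 else 0) * G (snd s))) =
     (\<Sum>k\<in>{0..K}. \<Sum>x\<in>BV n. mu K k * (piv n (pk K k) x * ((if k = 0 then 1 else 0) * G x)))"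
    unfolding Oc_def Dc_def by (simp add: sum.cartesian_product split_def mult.assoc)
  also have "\<dots> = (\<Sum>k\<in>{0..K}. if k = 0 then mu K 0 * (\<Sum>x\<in>BV n. piv n 0 x * G x) else 0)"
    by (rule sum.cong) (use assms in \<open>auto simp: sum_distrib_left\<close>)
  also have "\<dots> = 9/20 * G (zeros n)" by (simp add: sum_piv_0 mu_def)
  finally show ?thesis .
qed

lemma m1_bound:
  assumes "2 \<le> K"
  shows "(\<Sum>s\<in>Oc n K. Dc n K s * \<bar>cc K i s\<bar>) \<le> sqrt (\<Sum>s\<in>Oc n K. Dc n K s * (cc K i s)^2)"
proof -
  have "(\<Sum>s\<in>Oc n K. Dc n K s * \<bar>cc K i s\<bar>)^2 \<le> (\<Sum>s\<in>Oc n K. Dc n K s * \<bar>cc K i s\<bar>^2)"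
    by (rule jensen_sq) (use assms Dc_nonneg sum_Dc in auto)
  then show ?thesis by (intro real_le_rsqrt) simp
qed


definition Om :: "nat \<Rightarrow> nat \<Rightarrow> nat \<Rightarrow> (nat \<Rightarrow> nat \<times> (nat \<Rightarrow> bool)) set" where
  "Om n K d = PiE {..<d} (\<lambda>_. Oc n K)"
definition Wt :: "nat \<Rightarrow> nat \<Rightarrow> nat \<Rightarrow> (nat \<Rightarrow> nat \<times> (nat \<Rightarrow> bool)) \<Rightarrow> real" where
  "Wt n K d om = (\<Prod>j<d. Dc n K (om j))"
definition Yof :: "nat \<Rightarrow> nat \<Rightarrow> (nat \<Rightarrow> nat \<times> (nat \<Rightarrow> bool)) \<Rightarrow> nat \<Rightarrow> nat \<Rightarrow> bool" where
  "Yof n d om = (\<lambda>i j. i < n \<and> j < d \<and> snd (om j) i)"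
definition zrow :: "nat \<Rightarrow> (nat \<Rightarrow> nat \<Rightarrow> bool) \<Rightarrow> nat \<Rightarrow> nat \<Rightarrow> bool" where
  "zrow i Y = (\<lambda>i' j. if i' = i then False else Y i' j)"
definition Os :: "nat \<Rightarrow> (nat \<Rightarrow> bool) set" where "Os d = PiE {..<d} (\<lambda>_. UNIV)"
definition Err :: "nat \<Rightarrow> nat \<Rightarrow> (nat \<Rightarrow> nat \<Rightarrow> bool) \<Rightarrow> (nat \<Rightarrow> bool) \<Rightarrow> nat" where
  "Err n d Y u = card {j\<in>{..<d}. ((\<forall>i<n. Y i j) \<and> \<not> u j) \<or> ((\<forall>i<n. \<not> Y i j) \<and> u j)}"

lemma finite_Os[simp]: "finite (Os d)" by (simp add: Os_def finite_PiE)
lemma finite_Om[simp]: "finite (Om n K d)" by (simp add: Om_def finite_PiE)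

lemma Yof_datasets: "Yof n d om \<in> datasets n d" by (auto simp: Yof_def datasets_def)
lemma zrow_datasets: "Y \<in> datasets n d \<Longrightarrow> zrow i Y \<in> datasets n d" by (auto simp: zrow_def datasets_def)
lemma neighbors_zrow: "Y \<in> datasets n d \<Longrightarrow> i < n \<Longrightarrow> neighbors n d Y (zrow i Y)"
  unfolding neighbors_def using zrow_datasets by (auto simp: zrow_def)
lemma neighbors_sym: "neighbors n d Y Y' \<Longrightarrow> neighbors n d Y' Y"
  unfolding neighbors_def by metis

lemma Wt_nonneg: "2 \<le> K \<Longrightarrow> om \<in> Om n K d \<Longrightarrow> 0 \<le> Wt n K d om"
  unfolding Wt_def Om_def by (intro prod_nonneg Dc_nonneg) auto

lemma sum_Wt: "2 \<le> K \<Longrightarrow> (\<Sum>om\<in>Om n K d. Wt n K d om) = 1"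
  unfolding Wt_def Om_def by (rule sum_W_one) (auto simp: sum_Dc)

lemma upd_Om: "\<rho> \<in> PiE ({..<d} - {j}) (\<lambda>_. Oc n K) \<Longrightarrow> j < d \<Longrightarrow> s \<in> Oc n K \<Longrightarrow> \<rho>(j := s) \<in> Om n K d"
  unfolding Om_def by (auto simp: PiE_def extensional_def Pi_def)

lemma Wt_split:
  assumes "j < d"
  shows "(\<Sum>om\<in>Om n K d. Wt n K d om * G om) =
    (\<Sum>\<rho>\<in>PiE ({..<d} - {j}) (\<lambda>_. Oc n K). (\<Prod>j'\<in>{..<d} - {j}. Dc n K (\<rho> j')) * (\<Sum>s\<in>Oc n K. Dc n K s * G (\<rho>(j := s))))"
  unfolding Om_def Wt_def using assms by (intro sum_W_split) auto

lemma Wt_marginal: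
  assumes "j < d" "2 \<le> K"
  shows "(\<Sum>om\<in>Om n K d. Wt n K d om * F (om j)) = (\<Sum>s\<in>Oc n K. Dc n K s * F s)"
  unfolding Om_def Wt_def using assms by (intro sum_W_marginal) (auto simp: sum_Dc)

lemma Wt_marginal2:
  assumes "j < d" "j' < d" "j \<noteq> j'" "2 \<le> K"
  shows "(\<Sum>om\<in>Om n K d. Wt n K d om * (F (om j) * G (om j'))) = (\<Sum>s\<in>Oc n K. Dc n K s * F s) * (\<Sum>s\<in>Oc n K. Dc n K s * G s)"
  unfolding Om_def Wt_def using assms by (intro sum_W_marginal2) (auto simp: sum_Dc)

lemma cc_factor: "cc K i (k, x) = (if intr K k then (\<Prod>i'<i. rr K k ((x(i:=False)) i')) * (rr K k (x i) - 1) else 0)"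
proof -
  have "(\<Prod>i'<i. rr K k ((x(i:=False)) i')) = (\<Prod>i'<i. rr K k (x i'))" by (rule prod.cong) auto
  then show ?thesis by (simp add: cc_def)
qed

lemma zero_lemma:
  assumes j: "j < d" and i: "i < n"
    and inv: "\<And>om. om \<in> Om n K d \<Longrightarrow> \<Phi> (om(j := (fst (om j), (snd (om j))(i := False)))) = \<Phi> om"
  shows "(\<Sum>om\<in>Om n K d. Wt n K d om * (cc K i (om j) * \<Phi> om)) = 0"
proof -
  have inner: "(\<Sum>s\<in>Oc n K. Dc n K s * (cc K i ((\<rho>(j := s)) j) * \<Phi> (\<rho>(j := s)))) = 0"
    if \<rho>: "\<rho> \<in> PiE ({..<d} - {j}) (\<lambda>_. Oc n K)" for \<rho>
  proof -
    have "(\<Sum>s\<in>Oc n K. Dc n K s * (cc K i ((\<rho>(j := s)) j) * \<Phi> (\<rho>(j := s)))) =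
       (\<Sum>k\<in>{0..K}. \<Sum>x\<in>BV n. mu K k * (piv n (pk K k) x * (cc K i (k,x) * \<Phi> (\<rho>(j := (k,x))))))"
      unfolding Oc_def Dc_def by (simp add: sum.cartesian_product split_def mult.assoc)
    also have "\<dots> = (\<Sum>k\<in>{0..K}. 0)"
    proof (rule sum.cong)
      fix k assume k: "k \<in> {0..K}"
      show "(\<Sum>x\<in>BV n. mu K k * (piv n (pk K k) x * (cc K i (k,x) * \<Phi> (\<rho>(j := (k,x)))))) = 0"
      proof (cases "intr K k")
        case False then show ?thesis by (simp add: cc_def)
      next
        case True
        have a: "0 < k" "Suc k < K" using True by (auto simp: intr_def)
        have ph: "\<Phi> (\<rho>(j := (k,x))) = \<Phi> (\<rho>(j := (k,x(i:=False))))" if "x \<in> BV n" for x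
        proof -
          have m: "\<rho>(j := (k,x)) \<in> Om n K d" using upd_Om[OF \<rho> j, of "(k,x)"] k that by (simp add: Oc_def)
          show ?thesis using inv[OF m] by simp
        qed
        have "(\<Sum>x\<in>BV n. piv n (pk K k) x * (cc K i (k,x) * \<Phi> (\<rho>(j := (k,x))))) =
          (\<Sum>x\<in>BV n. piv n (pk K k) x * ((rr K k (x i) - 1) * ((\<lambda>y. (\<Prod>i'<i. rr K k (y i')) * \<Phi> (\<rho>(j := (k,y)))) (x(i:=False)))))"
          by (rule sum.cong) (auto simp: cc_factor True ph mult_ac)
        also have "\<dots> = 0" by (rule col_split_zero[OF i rr_mean[OF a]])
        finally show ?thesis by (simp add: sum_distrib_left[symmetric])
      qed
    qed simp
    finally show ?thesis by simp
  qed
  show ?thesis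
    by (subst Wt_split[OF j], rule sum.neutral) (use inner in simp)
qed

lemma telescope_cc: "(\<Sum>i<n. cc K i s) = tot K n s"
proof (cases "intr K (fst s)")
  case False then show ?thesis by (simp add: cc_def tot_def)
next
  case True
  have "(\<Sum>i<n. (\<Prod>i'<i. f i') * (f i - 1)) = (\<Prod>i<n. f i) - 1" for f :: "nat \<Rightarrow> real"
    by (induction n) (simp_all add: algebra_simps)
  then show ?thesis using True by (simp add: cc_def tot_def)
qed


lemma swap3:
  fixes w :: "'a \<Rightarrow> real"
  shows "(\<Sum>a\<in>A. w a * (\<Sum>b\<in>B. g a b * (\<Sum>c\<in>Cs. f a b c))) = (\<Sum>c\<in>Cs. \<Sum>b\<in>B. \<Sum>a\<in>A. w a * (g a b * f a b c))"
proof -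
  have "(\<Sum>a\<in>A. w a * (\<Sum>b\<in>B. g a b * (\<Sum>c\<in>Cs. f a b c))) = (\<Sum>a\<in>A. \<Sum>b\<in>B. \<Sum>c\<in>Cs. w a * (g a b * f a b c))"
    by (simp add: sum_distrib_left)
  also have "\<dots> = (\<Sum>a\<in>A. \<Sum>c\<in>Cs. \<Sum>b\<in>B. w a * (g a b * f a b c))"
    by (rule sum.cong[OF refl]) (rule sum.swap)
  also have "\<dots> = (\<Sum>c\<in>Cs. \<Sum>a\<in>A. \<Sum>b\<in>B. w a * (g a b * f a b c))" by (rule sum.swap)
  also have "\<dots> = (\<Sum>c\<in>Cs. \<Sum>b\<in>B. \<Sum>a\<in>A. w a * (g a b * f a b c))"
    by (rule sum.cong[OF refl]) (rule sum.swap)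
  finally show ?thesis .
qed

locale core =
  fixes n K d :: nat and q :: "(nat \<Rightarrow> nat \<Rightarrow> bool) \<Rightarrow> (nat \<Rightarrow> bool) \<Rightarrow> real" and \<epsilon> \<delta> :: real
  assumes K_def: "K = 10 * n" and n1: "1 \<le> n" and d1: "1 \<le> d"
    and ep: "0 \<le> \<epsilon>" and dl: "0 \<le> \<delta>"
    and Q1: "\<And>Y u. Y \<in> datasets n d \<Longrightarrow> u \<in> Os d \<Longrightarrow> 0 \<le> q Y u"
    and Q2: "\<And>Y. Y \<in> datasets n d \<Longrightarrow> sum (q Y) (Os d) = 1"
    and Q3: "\<And>Y Y' R. neighbors n d Y Y' \<Longrightarrow> R \<subseteq> Os d \<Longrightarrow> sum (q Y) R \<le> exp \<epsilon> * sum (q Y') R + \<delta>"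
    and Q4: "\<And>Y. Y \<in> datasets n d \<Longrightarrow> (\<Sum>u\<in>Os d. q Y u * real (Err n d Y u)) \<le> real d * (26/75)"
begin

lemma K2: "2 \<le> K" using K_def n1 by simp

definition phi :: "nat \<Rightarrow> (nat \<Rightarrow> nat \<times> (nat \<Rightarrow> bool)) \<Rightarrow> (nat \<Rightarrow> bool) \<Rightarrow> real" where
  "phi i om u = (\<Sum>j<d. if u j then cc K i (om j) else 0)"
definition AA :: "nat \<Rightarrow> (nat \<Rightarrow> nat \<times> (nat \<Rightarrow> bool)) \<Rightarrow> real" where
  "AA i om = (\<Sum>j<d. \<bar>cc K i (om j)\<bar>)"
definition vb :: real where "vb = 96 * nu K / real K"
definition TT :: real where "TT = real d * (sqrt vb + nu K)"
definition m1 :: "nat \<Rightarrow> real" where "m1 i = (\<Sum>s\<in>Oc n K. Dc n K s * \<bar>cc K i s\<bar>)"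
definition m2 :: "nat \<Rightarrow> real" where "m2 i = (\<Sum>s\<in>Oc n K. Dc n K s * (cc K i s)^2)"

lemma nu_pos: "0 < nu K" using K2 by (simp add: nu_def)
lemma vb_nonneg: "0 \<le> vb" using nu_pos by (simp add: vb_def)
lemma TT_nonneg: "0 \<le> TT" using nu_pos vb_nonneg by (simp add: TT_def)

lemma phi_bound: "\<bar>phi i om u\<bar> \<le> AA i om"
  unfolding phi_def AA_def by (rule order_trans[OF sum_abs]) (intro sum_mono, auto)

lemma R1:
  assumes "i < n" "om \<in> Om n K d"
  shows "(\<Sum>u\<in>Os d. q (Yof n d om) u * phi i om u) \<le>
     (\<Sum>u\<in>Os d. q (zrow i (Yof n d om)) u * phi i om u)
     + (exp \<epsilon> - 1) * (\<Sum>u\<in>Os d. q (zrow i (Yof n d om)) u * \<bar>phi i om u\<bar>)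
     + 2 * \<delta> * TT + 2 * max (AA i om - TT) 0"
proof -
  have Y: "Yof n d om \<in> datasets n d" by (rule Yof_datasets)
  have Y': "zrow i (Yof n d om) \<in> datasets n d" by (rule zrow_datasets[OF Y])
  have nb: "neighbors n d (Yof n d om) (zrow i (Yof n d om))" by (rule neighbors_zrow[OF Y assms(1)])
  show ?thesis
    by (rule dp_row[OF finite_Os Q1[OF Y] Q1[OF Y'] Q2[OF Y] Q2[OF Y'] Q3[OF nb] Q3[OF neighbors_sym[OF nb]] ep dl TT_nonneg phi_bound])
qed

lemma zrow_inv:
  assumes "i < n"
  shows "zrow i (Yof n d (om(j := (fst (om j), (snd (om j))(i := False))))) = zrow i (Yof n d om)"
  by (auto simp: zrow_def Yof_def fun_eq_iff)

lemma R2: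
  assumes "i < n"
  shows "(\<Sum>om\<in>Om n K d. Wt n K d om * (\<Sum>u\<in>Os d. q (zrow i (Yof n d om)) u * phi i om u)) = 0"
proof -
  have "(\<Sum>om\<in>Om n K d. Wt n K d om * (\<Sum>u\<in>Os d. q (zrow i (Yof n d om)) u * phi i om u)) =
     (\<Sum>j<d. \<Sum>u\<in>Os d. \<Sum>om\<in>Om n K d. Wt n K d om * (q (zrow i (Yof n d om)) u * (if u j then cc K i (om j) else 0)))"
    unfolding phi_def by (rule swap3)
  also have "\<dots> = (\<Sum>j<d. \<Sum>u\<in>Os d. 0)"
  proof (intro sum.cong refl)
    fix j u assume j: "j \<in> {..<d}"
    show "(\<Sum>om\<in>Om n K d. Wt n K d om * (q (zrow i (Yof n d om)) u * (if u j then cc K i (om j) else 0))) = 0"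
    proof (cases "u j")
      case False then show ?thesis by simp
    next
      case True
      have "(\<Sum>om\<in>Om n K d. Wt n K d om * (cc K i (om j) * q (zrow i (Yof n d om)) u)) = 0"
        by (rule zero_lemma) (use j assms zrow_inv in auto)
      then show ?thesis using True by (simp add: mult_ac)
    qed
  qed
  finally show ?thesis by simp
qed

end

context core begin

lemma m2_le: "i < n \<Longrightarrow> m2 i \<le> vb"
  unfolding m2_def vb_def using m2_bound[OF K_def n1] by simp

lemma m2_nonneg: "0 \<le> m2 i"
  unfolding m2_def using K2 by (intro sum_nonneg mult_nonneg_nonneg Dc_nonneg) auto

lemma m1_le: "i < n \<Longrightarrow> m1 i \<le> sqrt vb"
  using m1_bound[OF K2, of n i] m2_le[of i] unfolding m1_def m2_def
  by (meson order_trans real_sqrt_le_iff)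

lemma phi_sq: "(phi i om u)^2 = (\<Sum>j<d. \<Sum>j'<d. (if u j then cc K i (om j) else 0) * (if u j' then cc K i (om j') else 0))"
  unfolding phi_def power2_eq_square by (rule sum_product)

lemma R3:
  assumes i: "i < n"
  shows "(\<Sum>om\<in>Om n K d. Wt n K d om * (\<Sum>u\<in>Os d. q (zrow i (Yof n d om)) u * (phi i om u)^2)) \<le> real d * vb"
proof -
  define Q where "Q om u = q (zrow i (Yof n d om)) u" for om u
  have Q0: "0 \<le> Q om u" if "u \<in> Os d" for om u
    unfolding Q_def by (rule Q1[OF zrow_datasets[OF Yof_datasets] that])
  have Q1': "sum (Q om) (Os d) = 1" for om
    unfolding Q_def by (rule Q2[OF zrow_datasets[OF Yof_datasets]])
  have "(\<Sum>om\<in>Om n K d. Wt n K d om * (\<Sum>u\<in>Os d. Q om u * (phi i om u)^2)) =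
     (\<Sum>om\<in>Om n K d. Wt n K d om * (\<Sum>u\<in>Os d. Q om u * (\<Sum>j<d. \<Sum>j'<d. (if u j then cc K i (om j) else 0) * (if u j' then cc K i (om j') else 0))))"
    by (simp add: phi_sq)
  also have "\<dots> = (\<Sum>j<d. \<Sum>u\<in>Os d. \<Sum>om\<in>Om n K d. Wt n K d om * (Q om u * (\<Sum>j'<d. (if u j then cc K i (om j) else 0) * (if u j' then cc K i (om j') else 0))))"
    by (rule swap3)
  also have "\<dots> \<le> (\<Sum>j<d. \<Sum>u\<in>Os d. \<Sum>om\<in>Om n K d. Wt n K d om * (Q om u * (cc K i (om j))^2))"
  proof (rule sum_mono, rule sum_mono)
    fix j u assume j: "j \<in> {..<d}" and u: "u \<in> Os d"
    have E1: "(\<Sum>om\<in>Om n K d. Wt n K d om * (Q om u * (\<Sum>j'<d. (if u j then cc K i (om j) else 0) * (if u j' then cc K i (om j') else 0)))) =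
      (\<Sum>j'<d. \<Sum>om\<in>Om n K d. Wt n K d om * (Q om u * ((if u j then cc K i (om j) else 0) * (if u j' then cc K i (om j') else 0))))"
      by (subst sum.swap) (simp add: sum_distrib_left)
    have E2: "(\<Sum>j'<d. \<Sum>om\<in>Om n K d. Wt n K d om * (Q om u * ((if u j then cc K i (om j) else 0) * (if u j' then cc K i (om j') else 0)))) = (\<Sum>om\<in>Om n K d. Wt n K d om * (Q om u * ((if u j then cc K i (om j) else 0) * (if u j then cc K i (om j) else 0))))
        + (\<Sum>j'\<in>{..<d} - {j}. \<Sum>om\<in>Om n K d. Wt n K d om * (Q om u * ((if u j then cc K i (om j) else 0) * (if u j' then cc K i (om j') else 0))))"
      using j by (subst sum.remove[of _ j]) auto
    have E3: "(\<Sum>j'\<in>{..<d} - {j}. \<Sum>om\<in>Om n K d. Wt n K d om * (Q om u * ((if u j then cc K i (om j) else 0) * (if u j' then cc K i (om j') else 0)))) = 0"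
    proof (rule sum.neutral, rule ballI)
      fix j' assume j': "j' \<in> {..<d} - {j}"
      show "(\<Sum>om\<in>Om n K d. Wt n K d om * (Q om u * ((if u j then cc K i (om j) else 0) * (if u j' then cc K i (om j') else 0)))) = 0"
      proof (cases "u j \<and> u j'")
        case False then show ?thesis by auto
      next
        case True
        have "(\<Sum>om\<in>Om n K d. Wt n K d om * (cc K i (om j) * (Q om u * cc K i (om j')))) = 0"
          by (rule zero_lemma) (use j j' i zrow_inv in \<open>auto simp: Q_def\<close>)
        then show ?thesis using True by (simp add: mult_ac)
      qed
    qed
    have E4: "(\<Sum>om\<in>Om n K d. Wt n K d om * (Q om u * ((if u j then cc K i (om j) else 0) * (if u j then cc K i (om j) else 0))))
        \<le> (\<Sum>om\<in>Om n K d. Wt n K d om * (Q om u * (cc K i (om j))^2))"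
      by (intro sum_mono mult_left_mono Wt_nonneg[OF K2] Q0[OF u]) (auto simp: power2_eq_square)
    show "(\<Sum>om\<in>Om n K d. Wt n K d om * (Q om u * (\<Sum>j'<d. (if u j then cc K i (om j) else 0) * (if u j' then cc K i (om j') else 0))))
        \<le> (\<Sum>om\<in>Om n K d. Wt n K d om * (Q om u * (cc K i (om j))^2))" using E1 E2 E3 E4 by linarith
  qed
  also have "\<dots> = (\<Sum>j<d. \<Sum>om\<in>Om n K d. Wt n K d om * (cc K i (om j))^2)"
  proof (rule sum.cong[OF refl])
    fix j
    have "(\<Sum>u\<in>Os d. \<Sum>om\<in>Om n K d. Wt n K d om * (Q om u * (cc K i (om j))^2)) =
        (\<Sum>om\<in>Om n K d. Wt n K d om * (cc K i (om j))^2 * sum (Q om) (Os d))"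
      by (subst sum.swap) (rule sum.cong[OF refl], simp add: sum_distrib_left sum_distrib_right mult_ac)
    then show "(\<Sum>u\<in>Os d. \<Sum>om\<in>Om n K d. Wt n K d om * (Q om u * (cc K i (om j))^2)) = (\<Sum>om\<in>Om n K d. Wt n K d om * (cc K i (om j))^2)"
      by (simp add: Q1')
  qed
  also have "\<dots> = (\<Sum>j<d. m2 i)"
    by (rule sum.cong[OF refl]) (simp add: m2_def Wt_marginal[OF _ K2, where F="\<lambda>s. (cc K i s)^2"])
  also have "\<dots> \<le> real d * vb" using m2_le[OF i] by (simp add: mult_left_mono)
  finally show ?thesis by (simp add: Q_def)
qed

lemma R4:
  assumes i: "i < n"
  shows "(\<Sum>om\<in>Om n K d. Wt n K d om * (\<Sum>u\<in>Os d. q (zrow i (Yof n d om)) u * \<bar>phi i om u\<bar>)) \<le> sqrt (real d * vb)"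
proof -
  define g where "g om = (\<Sum>u\<in>Os d. q (zrow i (Yof n d om)) u * \<bar>phi i om u\<bar>)" for om
  have "(\<Sum>om\<in>Om n K d. Wt n K d om * g om)^2 \<le> (\<Sum>om\<in>Om n K d. Wt n K d om * (g om)^2)"
    by (rule jensen_sq) (auto intro: Wt_nonneg[OF K2] simp: sum_Wt[OF K2])
  also have "\<dots> \<le> (\<Sum>om\<in>Om n K d. Wt n K d om * (\<Sum>u\<in>Os d. q (zrow i (Yof n d om)) u * (phi i om u)^2))"
  proof (intro sum_mono mult_left_mono Wt_nonneg[OF K2])
    fix om
    show "(g om)^2 \<le> (\<Sum>u\<in>Os d. q (zrow i (Yof n d om)) u * (phi i om u)^2)"
      unfolding g_def using jensen_sq[OF finite_Os, where w="q (zrow i (Yof n d om))" and f="\<lambda>u. \<bar>phi i om u\<bar>"]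
        Q1[OF zrow_datasets[OF Yof_datasets]] Q2[OF zrow_datasets[OF Yof_datasets]] by simp
  qed
  also have "\<dots> \<le> real d * vb" by (rule R3[OF i])
  finally show ?thesis unfolding g_def by (intro real_le_rsqrt)
qed

end

lemma swap2:
  fixes w :: "'a \<Rightarrow> real"
  shows "(\<Sum>a\<in>A. w a * (\<Sum>b\<in>B. \<Sum>c\<in>Cs. f a b c)) = (\<Sum>b\<in>B. \<Sum>c\<in>Cs. \<Sum>a\<in>A. w a * f a b c)"
proof -
  have "(\<Sum>a\<in>A. w a * (\<Sum>b\<in>B. \<Sum>c\<in>Cs. f a b c)) = (\<Sum>a\<in>A. \<Sum>b\<in>B. \<Sum>c\<in>Cs. w a * f a b c)"
    by (simp add: sum_distrib_left)
  also have "\<dots> = (\<Sum>b\<in>B. \<Sum>a\<in>A. \<Sum>c\<in>Cs. w a * f a b c)" by (rule sum.swap)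
  also have "\<dots> = (\<Sum>b\<in>B. \<Sum>c\<in>Cs. \<Sum>a\<in>A. w a * f a b c)"
    by (rule sum.cong[OF refl]) (rule sum.swap)
  finally show ?thesis .
qed

lemma lin4:
  fixes w a b m :: "'a \<Rightarrow> real"
  shows "(\<Sum>x\<in>A. w x * (a x + e * b x + c + 2 * m x)) =
    (\<Sum>x\<in>A. w x * a x) + e * (\<Sum>x\<in>A. w x * b x) + c * (\<Sum>x\<in>A. w x) + 2 * (\<Sum>x\<in>A. w x * m x)"
proof -
  have "(\<Sum>x\<in>A. w x * (a x + e * b x + c + 2 * m x)) = (\<Sum>x\<in>A. w x * a x + e * (w x * b x) + c * w x + 2 * (w x * m x))"
    by (rule sum.cong[OF refl]) (simp add: algebra_simps)
  also have "\<dots> = (\<Sum>x\<in>A. w x * a x) + (\<Sum>x\<in>A. e * (w x * b x)) + (\<Sum>x\<in>A. c * w x) + (\<Sum>x\<in>A. 2 * (w x * m x))"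
    by (simp add: sum.distrib)
  also have "\<dots> = (\<Sum>x\<in>A. w x * a x) + e * (\<Sum>x\<in>A. w x * b x) + c * (\<Sum>x\<in>A. w x) + 2 * (\<Sum>x\<in>A. w x * m x)"
    by (simp only: sum_distrib_left[symmetric])
  finally show ?thesis .
qed

context core begin

lemma R5:
  assumes i: "i < n"
  shows "(\<Sum>om\<in>Om n K d. Wt n K d om * max (AA i om - TT) 0) \<le> vb / nu K"
proof -
  define M where "M = m1 i"
  define gap where "gap = TT - real d * M"
  have M0: "0 \<le> M" unfolding M_def m1_def using K2 by (intro sum_nonneg mult_nonneg_nonneg Dc_nonneg) auto
  have gap: "real d * nu K \<le> gap"
  proof -
    have "real d * M \<le> real d * sqrt vb" using m1_le[OF i] by (simp add: M_def mult_left_mono)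
    then show ?thesis by (simp add: gap_def TT_def algebra_simps)
  qed
  have dn: "0 < real d * nu K" using d1 nu_pos by simp
  have gpos: "0 < gap" using gap dn by linarith
  have pw: "max (AA i om - TT) 0 \<le> (AA i om - real d * M)^2 / gap" for om
  proof (cases "AA i om \<le> TT")
    case True then show ?thesis using gpos by simp
  next
    case False
    then have h: "gap \<le> AA i om - real d * M" by (simp add: gap_def)
    have "AA i om - real d * M \<le> (AA i om - real d * M)^2 / gap"
      using h gpos by (simp add: le_divide_eq power2_eq_square mult_left_mono)
    moreover have "max (AA i om - TT) 0 = AA i om - TT" using False by simp
    ultimately show ?thesis using gpos unfolding gap_def by linarith
  qed
  define uf where "uf s = \<bar>cc K i s\<bar> - M" for s
  have sum_uf: "(\<Sum>s\<in>Oc n K. Dc n K s * uf s) = 0"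
    using sum_Dc[OF K2, of n] by (simp add: uf_def right_diff_distrib sum_subtractf m1_def M_def sum_distrib_right[symmetric])
  have sum_uf2: "(\<Sum>s\<in>Oc n K. Dc n K s * (uf s)^2) \<le> m2 i"
  proof -
    have "(\<Sum>s\<in>Oc n K. Dc n K s * (uf s)^2) = (\<Sum>s\<in>Oc n K. Dc n K s * (cc K i s)^2) - 2 * M * (\<Sum>s\<in>Oc n K. Dc n K s * \<bar>cc K i s\<bar>) + M^2 * (\<Sum>s\<in>Oc n K. Dc n K s)"
      by (simp add: uf_def power2_eq_square algebra_simps sum.distrib sum_subtractf sum_distrib_left)
    also have "\<dots> = m2 i - M^2" using sum_Dc[OF K2, of n] by (simp add: m2_def M_def m1_def power2_eq_square)
    finally show ?thesis by simp
  qed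
  have AAe: "AA i om - real d * M = (\<Sum>j<d. uf (om j))" for om
    by (simp add: AA_def uf_def sum_subtractf)
  have sq: "(\<Sum>om\<in>Om n K d. Wt n K d om * (AA i om - real d * M)^2) \<le> real d * m2 i"
  proof -
    have "(\<Sum>om\<in>Om n K d. Wt n K d om * (AA i om - real d * M)^2) =
      (\<Sum>om\<in>Om n K d. Wt n K d om * (\<Sum>j<d. \<Sum>j'<d. uf (om j) * uf (om j')))"
      by (simp add: AAe power2_eq_square sum_product)
    also have "\<dots> = (\<Sum>j<d. \<Sum>j'<d. \<Sum>om\<in>Om n K d. Wt n K d om * (uf (om j) * uf (om j')))"
      by (rule swap2)
    also have "\<dots> = (\<Sum>j<d. \<Sum>j'<d. if j = j' then (\<Sum>s\<in>Oc n K. Dc n K s * (uf s)^2) else 0)"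
    proof (intro sum.cong refl)
      fix j j' assume j: "j \<in> {..<d}" and j': "j' \<in> {..<d}"
      show "(\<Sum>om\<in>Om n K d. Wt n K d om * (uf (om j) * uf (om j'))) = (if j = j' then (\<Sum>s\<in>Oc n K. Dc n K s * (uf s)^2) else 0)"
      proof (cases "j = j'")
        case True
        then show ?thesis using Wt_marginal[OF _ K2, where F="\<lambda>s. (uf s)^2"] j by (simp add: power2_eq_square)
      next
        case False
        then show ?thesis using Wt_marginal2[OF _ _ False K2, where F=uf and G=uf] j j' sum_uf by simp
      qed
    qed
    also have "\<dots> = (\<Sum>j<d. (\<Sum>s\<in>Oc n K. Dc n K s * (uf s)^2))"
      by (simp add: sum.delta)
    also have "\<dots> \<le> real d * m2 i" using sum_uf2 by (simp add: mult_left_mono)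
    finally show ?thesis .
  qed
  have "(\<Sum>om\<in>Om n K d. Wt n K d om * max (AA i om - TT) 0) \<le> (\<Sum>om\<in>Om n K d. Wt n K d om * ((AA i om - real d * M)^2 / gap))"
    by (intro sum_mono mult_left_mono pw Wt_nonneg[OF K2])
  also have "\<dots> = (\<Sum>om\<in>Om n K d. Wt n K d om * (AA i om - real d * M)^2) / gap"
    by (simp add: sum_divide_distrib)
  also have "\<dots> \<le> real d * m2 i / gap" using sq gpos by (simp add: divide_right_mono)
  also have "\<dots> \<le> real d * vb / (real d * nu K)"
  proof (rule frac_le)
    show "0 \<le> real d * vb" using vb_nonneg by simp
    show "real d * m2 i \<le> real d * vb" using m2_le[OF i] by (simp add: mult_left_mono)
    show "0 < real d * nu K" using d1 nu_pos by simp
    show "real d * nu K \<le> gap" by (rule gap)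
  qed
  also have "\<dots> = vb / nu K" using d1 by simp
  finally show ?thesis .
qed

definition Ei :: "nat \<Rightarrow> real" where
  "Ei i = (\<Sum>om\<in>Om n K d. Wt n K d om * (\<Sum>u\<in>Os d. q (Yof n d om) u * phi i om u))"

lemma row_bound:
  assumes i: "i < n"
  shows "Ei i \<le> (exp \<epsilon> - 1) * sqrt (real d * vb) + 2 * \<delta> * TT + 2 * (vb / nu K)"
proof -
  define Q' where "Q' om u = q (zrow i (Yof n d om)) u" for om u
  have "Ei i \<le> (\<Sum>om\<in>Om n K d. Wt n K d om * ((\<Sum>u\<in>Os d. Q' om u * phi i om u)
     + (exp \<epsilon> - 1) * (\<Sum>u\<in>Os d. Q' om u * \<bar>phi i om u\<bar>)
     + 2 * \<delta> * TT + 2 * max (AA i om - TT) 0))"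
    unfolding Ei_def Q'_def by (intro sum_mono mult_left_mono R1[OF i] Wt_nonneg[OF K2]) auto
  also have "\<dots> = (\<Sum>om\<in>Om n K d. Wt n K d om * (\<Sum>u\<in>Os d. Q' om u * phi i om u))
     + (exp \<epsilon> - 1) * (\<Sum>om\<in>Om n K d. Wt n K d om * (\<Sum>u\<in>Os d. Q' om u * \<bar>phi i om u\<bar>))
     + (2 * \<delta> * TT) * (\<Sum>om\<in>Om n K d. Wt n K d om) + 2 * (\<Sum>om\<in>Om n K d. Wt n K d om * max (AA i om - TT) 0)"
    by (rule lin4)
  also have "(\<Sum>om\<in>Om n K d. Wt n K d om * (\<Sum>u\<in>Os d. Q' om u * phi i om u)) = 0"
    unfolding Q'_def by (rule R2[OF i])
  also have "(\<Sum>om\<in>Om n K d. Wt n K d om) = 1" by (rule sum_Wt[OF K2])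
  finally have X: "Ei i \<le> (exp \<epsilon> - 1) * (\<Sum>om\<in>Om n K d. Wt n K d om * (\<Sum>u\<in>Os d. Q' om u * \<bar>phi i om u\<bar>))
     + 2 * \<delta> * TT + 2 * (\<Sum>om\<in>Om n K d. Wt n K d om * max (AA i om - TT) 0)" by simp
  have e1: "0 \<le> exp \<epsilon> - 1" using ep by simp
  have "(exp \<epsilon> - 1) * (\<Sum>om\<in>Om n K d. Wt n K d om * (\<Sum>u\<in>Os d. Q' om u * \<bar>phi i om u\<bar>)) \<le> (exp \<epsilon> - 1) * sqrt (real d * vb)"
    using R4[OF i] e1 unfolding Q'_def by (intro mult_left_mono) auto
  then show ?thesis using X R5[OF i] by linarith
qed

end

context core begin

definition HH :: "nat \<Rightarrow> (nat \<Rightarrow> nat \<times> (nat \<Rightarrow> bool)) \<Rightarrow> real" where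
  "HH j om = (\<Sum>u\<in>Os d. q (Yof n d om) u * (if u j then 1 else 0))"

lemma HH_01: "0 \<le> HH j om \<and> HH j om \<le> 1"
proof -
  have Y: "Yof n d om \<in> datasets n d" by (rule Yof_datasets)
  have "0 \<le> HH j om" unfolding HH_def using Q1[OF Y] by (intro sum_nonneg) auto
  moreover have "HH j om \<le> (\<Sum>u\<in>Os d. q (Yof n d om) u)" unfolding HH_def
    using Q1[OF Y] by (intro sum_mono) auto
  ultimately show ?thesis using Q2[OF Y] by simp
qed

lemma S_eq: "(\<Sum>i<n. Ei i) = (\<Sum>j<d. \<Sum>om\<in>Om n K d. Wt n K d om * (tot K n (om j) * HH j om))"
proof -
  have "(\<Sum>i<n. Ei i) = (\<Sum>om\<in>Om n K d. Wt n K d om * (\<Sum>u\<in>Os d. q (Yof n d om) u * (\<Sum>i<n. phi i om u)))"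
  proof -
    have "(\<Sum>i<n. Ei i) =
      (\<Sum>om\<in>Om n K d. \<Sum>i<n. Wt n K d om * (\<Sum>u\<in>Os d. q (Yof n d om) u * phi i om u))" unfolding Ei_def by (rule sum.swap)
    also have "\<dots> = (\<Sum>om\<in>Om n K d. Wt n K d om * (\<Sum>u\<in>Os d. q (Yof n d om) u * (\<Sum>i<n. phi i om u)))"
    proof (rule sum.cong[OF refl])
      fix om
      have "(\<Sum>i<n. \<Sum>u\<in>Os d. q (Yof n d om) u * phi i om u) = (\<Sum>u\<in>Os d. \<Sum>i<n. q (Yof n d om) u * phi i om u)"
        by (rule sum.swap)
      then show "(\<Sum>i<n. Wt n K d om * (\<Sum>u\<in>Os d. q (Yof n d om) u * phi i om u)) = Wt n K d om * (\<Sum>u\<in>Os d. q (Yof n d om) u * (\<Sum>i<n. phi i om u))"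
        by (simp add: sum_distrib_left[symmetric])
    qed
    finally show ?thesis .
  qed
  also have "\<dots> = (\<Sum>om\<in>Om n K d. Wt n K d om * (\<Sum>u\<in>Os d. q (Yof n d om) u * (\<Sum>j<d. if u j then tot K n (om j) else 0)))"
  proof -
    have phis: "(\<Sum>i<n. phi i om u) = (\<Sum>j<d. if u j then tot K n (om j) else 0)" for om u
    proof -
      have "(\<Sum>i<n. phi i om u) = (\<Sum>j<d. \<Sum>i<n. if u j then cc K i (om j) else 0)"
        unfolding phi_def by (rule sum.swap)
      also have "\<dots> = (\<Sum>j<d. if u j then tot K n (om j) else 0)"
        by (rule sum.cong[OF refl]) (simp add: telescope_cc)
      finally show ?thesis .
    qed
    show ?thesis by (simp only: phis)
  qed
  also have "\<dots> = (\<Sum>j<d. \<Sum>om\<in>Om n K d. Wt n K d om * (tot K n (om j) * HH j om))"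
  proof -
    have "(\<Sum>u\<in>Os d. q (Yof n d om) u * (\<Sum>j<d. if u j then tot K n (om j) else 0)) = (\<Sum>j<d. tot K n (om j) * HH j om)" for om
    proof -
      have "(\<Sum>u\<in>Os d. q (Yof n d om) u * (\<Sum>j<d. if u j then tot K n (om j) else 0)) =
          (\<Sum>j<d. \<Sum>u\<in>Os d. q (Yof n d om) u * (if u j then tot K n (om j) else 0))"
        by (simp only: sum_distrib_left) (rule sum.swap)
      also have "\<dots> = (\<Sum>j<d. tot K n (om j) * HH j om)"
        by (rule sum.cong[OF refl]) (simp add: HH_def sum_distrib_left mult_ac if_distrib cong: if_cong)
      finally show ?thesis .
    qed
    then have "(\<Sum>om\<in>Om n K d. Wt n K d om * (\<Sum>u\<in>Os d. q (Yof n d om) u * (\<Sum>j<d. if u j then tot K n (om j) else 0)))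
      = (\<Sum>om\<in>Om n K d. \<Sum>j<d. Wt n K d om * (tot K n (om j) * HH j om))" by (simp add: sum_distrib_left)
    also have "\<dots> = (\<Sum>j<d. \<Sum>om\<in>Om n K d. Wt n K d om * (tot K n (om j) * HH j om))" by (rule sum.swap)
    finally show ?thesis .
  qed
  finally show ?thesis .
qed

end

lemma lin3:
  fixes w a b :: "'a \<Rightarrow> real"
  shows "(\<Sum>x\<in>A. w x * (v * (e * a x - e * b x - c))) = v * (e * (\<Sum>x\<in>A. w x * a x) - e * (\<Sum>x\<in>A. w x * b x) - c * (\<Sum>x\<in>A. w x))"
proof -
  have "(\<Sum>x\<in>A. w x * (v * (e * a x - e * b x - c))) = (\<Sum>x\<in>A. (v * e) * (w x * a x) - (v * e) * (w x * b x) - (v * c) * w x)"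
    by (rule sum.cong[OF refl]) (simp add: algebra_simps)
  also have "\<dots> = (v * e) * (\<Sum>x\<in>A. w x * a x) - (v * e) * (\<Sum>x\<in>A. w x * b x) - (v * c) * (\<Sum>x\<in>A. w x)"
    by (simp add: sum_subtractf sum_distrib_left)
  finally show ?thesis by (simp add: algebra_simps)
qed

context core begin

definition PK :: "nat \<Rightarrow> real" where
  "PK j = (\<Sum>om\<in>Om n K d. Wt n K d om * ((if fst (om j) = K then 1 else 0) * HH j om))"
definition P0 :: "nat \<Rightarrow> real" where
  "P0 j = (\<Sum>om\<in>Om n K d. Wt n K d om * ((if fst (om j) = 0 then 1 else 0) * HH j om))"

lemma HH_upd: "HH j (\<rho>(j := s)) = HH j (\<rho>(j := (0, snd s)))"
proof -
  have "Yof n d (\<rho>(j := s)) = Yof n d (\<rho>(j := (0, snd s)))" by (auto simp: Yof_def fun_eq_iff)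
  then show ?thesis by (simp add: HH_def)
qed

lemma sig_col:
  assumes j: "j < d"
  shows "(\<Sum>om\<in>Om n K d. Wt n K d om * (tot K n (om j) * HH j om)) \<ge> nu K * ((20/9) * PK j - (20/9) * P0 j - 2 * real n * pk K 1)"
proof -
  define Pr where "Pr \<rho> = (\<Prod>j'\<in>{..<d} - {j}. Dc n K (\<rho> j'))" for \<rho> :: "nat \<Rightarrow> nat \<times> (nat \<Rightarrow> bool)"
  define R where "R = PiE ({..<d} - {j}) (\<lambda>_. Oc n K)"
  define iK where "iK \<rho> = (\<Sum>s\<in>Oc n K. Dc n K s * ((if fst s = K then 1 else 0) * HH j (\<rho>(j := s))))" for \<rho>
  define i0 where "i0 \<rho> = (\<Sum>s\<in>Oc n K. Dc n K s * ((if fst s = 0 then 1 else 0) * HH j (\<rho>(j := s))))" for \<rho>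
  define it where "it \<rho> = (\<Sum>s\<in>Oc n K. Dc n K s * (tot K n s * HH j (\<rho>(j := s))))" for \<rho>
  have Pr0: "0 \<le> Pr \<rho>" if "\<rho> \<in> R" for \<rho>
    unfolding Pr_def using that K2 by (intro prod_nonneg Dc_nonneg) (auto simp: R_def)
  have sPr: "(\<Sum>\<rho>\<in>R. Pr \<rho>) = 1" unfolding Pr_def R_def by (rule sum_W_one) (auto simp: sum_Dc[OF K2])
  have eqt: "(\<Sum>om\<in>Om n K d. Wt n K d om * (tot K n (om j) * HH j om)) = (\<Sum>\<rho>\<in>R. Pr \<rho> * it \<rho>)"
    unfolding Pr_def R_def it_def by (subst Wt_split[OF j]) simp
  have eqK: "PK j = (\<Sum>\<rho>\<in>R. Pr \<rho> * iK \<rho>)"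
    unfolding PK_def Pr_def R_def iK_def by (subst Wt_split[OF j]) simp
  have eq0: "P0 j = (\<Sum>\<rho>\<in>R. Pr \<rho> * i0 \<rho>)"
    unfolding P0_def Pr_def R_def i0_def by (subst Wt_split[OF j]) simp
  have pw: "it \<rho> \<ge> nu K * ((20/9) * iK \<rho> - (20/9) * i0 \<rho> - 2 * real n * pk K 1)" for \<rho>
  proof -
    define G where "G x = HH j (\<rho>(j := (0, x)))" for x
    have G01: "0 \<le> G x \<and> G x \<le> 1" for x unfolding G_def by (rule HH_01)
    have HG: "HH j (\<rho>(j := s)) = G (snd s)" for s unfolding G_def by (rule HH_upd)
    have a: "it \<rho> = (\<Sum>s\<in>Oc n K. Dc n K s * (tot K n s * G (snd s)))"
      unfolding it_def by (rule sum.cong[OF refl]) (simp add: HG)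
    have b: "iK \<rho> = 9/20 * G (ones n)"
      unfolding iK_def using endpoint_K[OF K2, of n G] by (simp add: HG)
    have c: "i0 \<rho> = 9/20 * G (zeros n)"
      unfolding i0_def using endpoint_0[OF K2, of n G] by (simp add: HG)
    have e1: "(20/9) * iK \<rho> = G (ones n)" using b by simp
    have e2: "(20/9) * i0 \<rho> = G (zeros n)" using c by simp
    show ?thesis unfolding e1 e2 a using signal_col[OF K_def n1, of G] G01 by blast
  qed
  have "(\<Sum>\<rho>\<in>R. Pr \<rho> * it \<rho>) \<ge> (\<Sum>\<rho>\<in>R. Pr \<rho> * (nu K * ((20/9) * iK \<rho> - (20/9) * i0 \<rho> - 2 * real n * pk K 1)))"
    by (intro sum_mono mult_left_mono pw Pr0)
  also have "(\<Sum>\<rho>\<in>R. Pr \<rho> * (nu K * ((20/9) * iK \<rho> - (20/9) * i0 \<rho> - 2 * real n * pk K 1)))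
     = nu K * ((20/9) * (\<Sum>\<rho>\<in>R. Pr \<rho> * iK \<rho>) - (20/9) * (\<Sum>\<rho>\<in>R. Pr \<rho> * i0 \<rho>) - (2 * real n * pk K 1) * (\<Sum>\<rho>\<in>R. Pr \<rho>))"
    by (rule lin3)
  finally show ?thesis using eqt eqK eq0 sPr by simp
qed

end

lemma linS:
  fixes x :: "nat \<Rightarrow> real"
  shows "(\<Sum>j<d. v * (1 - c * x j - e)) = v * (real d - c * (\<Sum>j<d. x j) - e * real d)"
proof -
  have "(\<Sum>j<d. v * (1 - c * x j - e)) = (\<Sum>j<d. (v - v * e) - (v * c) * x j)"
    by (rule sum.cong[OF refl]) (simp add: algebra_simps)
  also have "\<dots> = real d * (v - v * e) - (v * c) * (\<Sum>j<d. x j)"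
    by (simp add: sum_subtractf sum_distrib_left)
  finally show ?thesis by (simp add: algebra_simps)
qed

context core begin

definition PKc :: "nat \<Rightarrow> real" where
  "PKc j = (\<Sum>om\<in>Om n K d. Wt n K d om * ((if fst (om j) = K then 1 else 0) * (1 - HH j om)))"

lemma PK_eq: assumes j: "j < d" shows "PK j = 9/20 - PKc j"
proof -
  have "PK j + PKc j = (\<Sum>om\<in>Om n K d. Wt n K d om * (\<lambda>s. (if fst s = K then 1 else 0)) (om j))"
    unfolding PK_def PKc_def by (simp add: sum.distrib[symmetric] algebra_simps)
  also have "\<dots> = (\<Sum>s\<in>Oc n K. Dc n K s * (if fst s = K then 1 else 0))"
    by (rule Wt_marginal[OF j K2])
  also have "\<dots> = 9/20" using endpoint_K[OF K2, of n "\<lambda>_. 1"] by simp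
  finally show ?thesis by simp
qed

lemma Wt_ne0:
  assumes om: "om \<in> Om n K d" and W: "Wt n K d om \<noteq> 0" and j: "j < d"
  shows "fst (om j) = K \<Longrightarrow> (\<forall>i<n. Yof n d om i j)" and "fst (om j) = 0 \<Longrightarrow> (\<forall>i<n. \<not> Yof n d om i j)"
proof -
  have D: "Dc n K (om j) \<noteq> 0" using W j unfolding Wt_def by (auto simp: prod_zero_iff)
  have x: "snd (om j) \<in> BV n" using om j by (auto simp: Om_def Oc_def PiE_def Pi_def)
  show "fst (om j) = K \<Longrightarrow> (\<forall>i<n. Yof n d om i j)"
  proof -
    assume k: "fst (om j) = K"
    have "piv n 1 (snd (om j)) \<noteq> 0" using D k K2 by (simp add: Dc_def)
    then have "snd (om j) = ones n" using piv_1[OF x] by (auto split: if_splits)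
    then show ?thesis using j by (simp add: Yof_def ones_def)
  qed
  show "fst (om j) = 0 \<Longrightarrow> (\<forall>i<n. \<not> Yof n d om i j)"
  proof -
    assume k: "fst (om j) = 0"
    have "piv n 0 (snd (om j)) \<noteq> 0" using D k by (simp add: Dc_def)
    then have "snd (om j) = zeros n" using piv_0[OF x] by (auto split: if_splits)
    then show ?thesis using j by (simp add: Yof_def zeros_def)
  qed
qed

lemma err_pointwise:
  assumes om: "om \<in> Om n K d" and W: "Wt n K d om \<noteq> 0"
  shows "(\<Sum>j<d. (if fst (om j) = K then 1 else 0) * (1 - HH j om) + (if fst (om j) = 0 then 1 else 0) * HH j om)
     \<le> (\<Sum>u\<in>Os d. q (Yof n d om) u * real (Err n d (Yof n d om) u))"
proof -
  define Y where "Y = Yof n d om"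
  have Yd: "Y \<in> datasets n d" unfolding Y_def by (rule Yof_datasets)
  define f where "f j u = (if fst (om j) = K then 1 else 0) * (if u j then 0 else 1) + (if fst (om j) = 0 then 1 else (0::real)) * (if u j then 1 else 0)" for j u
  have oneH: "1 - HH j om = (\<Sum>u\<in>Os d. q Y u * (if u j then 0 else 1))" for j
  proof -
    have "(\<Sum>u\<in>Os d. q Y u * (if u j then 0 else 1)) = (\<Sum>u\<in>Os d. q Y u - q Y u * (if u j then 1 else 0))"
      by (rule sum.cong) auto
    then show ?thesis using Q2[OF Yd] by (simp add: HH_def Y_def sum_subtractf)
  qed
  have "(\<Sum>j<d. (if fst (om j) = K then 1 else 0) * (1 - HH j om) + (if fst (om j) = 0 then 1 else 0) * HH j om)
      = (\<Sum>j<d. \<Sum>u\<in>Os d. q Y u * f j u)"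
  proof (rule sum.cong[OF refl])
    fix j
    have "(\<Sum>u\<in>Os d. q Y u * f j u) = (if fst (om j) = K then 1 else 0) * (\<Sum>u\<in>Os d. q Y u * (if u j then 0 else 1))
        + (if fst (om j) = 0 then 1 else 0) * (\<Sum>u\<in>Os d. q Y u * (if u j then 1 else 0))"
      unfolding f_def by (simp add: distrib_left sum.distrib sum_distrib_left mult.left_commute)
    then show "(if fst (om j) = K then 1 else 0) * (1 - HH j om) + (if fst (om j) = 0 then 1 else 0) * HH j om = (\<Sum>u\<in>Os d. q Y u * f j u)"
    proof -
      have HHe: "HH j om = (\<Sum>u\<in>Os d. q Y u * (if u j then 1 else 0))" by (simp add: HH_def Y_def)
      show ?thesis using \<open>(\<Sum>u\<in>Os d. q Y u * f j u) = _\<close> by (subst oneH, subst HHe) simp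
    qed
  qed
  also have "\<dots> = (\<Sum>u\<in>Os d. q Y u * (\<Sum>j<d. f j u))"
    by (subst sum.swap) (simp add: sum_distrib_left)
  also have "\<dots> \<le> (\<Sum>u\<in>Os d. q Y u * real (Err n d Y u))"
  proof (intro sum_mono mult_left_mono Q1[OF Yd])
    fix u assume u: "u \<in> Os d"
    define ES where "ES = {j\<in>{..<d}. ((\<forall>i<n. Y i j) \<and> \<not> u j) \<or> ((\<forall>i<n. \<not> Y i j) \<and> u j)}"
    have "(\<Sum>j<d. f j u) \<le> (\<Sum>j<d. if j \<in> ES then 1 else 0)"
    proof (rule sum_mono)
      fix j assume j: "j \<in> {..<d}"
      have K0: "K \<noteq> 0" using K2 by simp
      show "f j u \<le> (if j \<in> ES then 1 else 0)"
        using Wt_ne0[OF om W, of j] j K0 by (auto simp: f_def ES_def Y_def)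
    qed
    also have "\<dots> = real (card ES)"
      by (simp add: sum.If_cases ES_def Int_def)
    finally show "(\<Sum>j<d. f j u) \<le> real (Err n d Y u)" by (simp add: Err_def ES_def)
  qed
  finally show ?thesis by (simp add: Y_def)
qed

lemma err_sum: "(\<Sum>j<d. PKc j + P0 j) \<le> real d * (26/75)"
proof -
  have "(\<Sum>j<d. PKc j + P0 j) = (\<Sum>om\<in>Om n K d. Wt n K d om *
      (\<Sum>j<d. (if fst (om j) = K then 1 else 0) * (1 - HH j om) + (if fst (om j) = 0 then 1 else 0) * HH j om))"
    unfolding PKc_def P0_def by (simp add: sum.distrib[symmetric] sum_distrib_left algebra_simps) (rule sum.swap)
  also have "\<dots> \<le> (\<Sum>om\<in>Om n K d. Wt n K d om * (\<Sum>u\<in>Os d. q (Yof n d om) u * real (Err n d (Yof n d om) u)))"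
  proof (rule sum_mono)
    fix om assume om: "om \<in> Om n K d"
    show "Wt n K d om * (\<Sum>j<d. (if fst (om j) = K then 1 else 0) * (1 - HH j om) + (if fst (om j) = 0 then 1 else 0) * HH j om)
      \<le> Wt n K d om * (\<Sum>u\<in>Os d. q (Yof n d om) u * real (Err n d (Yof n d om) u))"
    proof (cases "Wt n K d om = 0")
      case True then show ?thesis by simp
    next
      case False then show ?thesis
        using err_pointwise[OF om False] Wt_nonneg[OF K2 om] by (intro mult_left_mono) auto
    qed
  qed
  also have "\<dots> \<le> (\<Sum>om\<in>Om n K d. Wt n K d om * (real d * (26/75)))"
    by (intro sum_mono mult_left_mono Q4[OF Yof_datasets] Wt_nonneg[OF K2])
  also have "\<dots> = (\<Sum>om\<in>Om n K d. Wt n K d om) * (real d * (26/75))" by (rule sum_distrib_right[symmetric])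
  also have "\<dots> = real d * (26/75)" using sum_Wt[OF K2] by simp
  finally show ?thesis .
qed

lemma S_lower: "(\<Sum>i<n. Ei i) \<ge> nu K * (real d - (20/9) * (real d * (26/75)) - 2 * real n * pk K 1 * real d)"
proof -
  have "(\<Sum>i<n. Ei i) \<ge> (\<Sum>j<d. nu K * ((20/9) * PK j - (20/9) * P0 j - 2 * real n * pk K 1))"
    unfolding S_eq by (intro sum_mono sig_col) auto
  also have "(\<Sum>j<d. nu K * ((20/9) * PK j - (20/9) * P0 j - 2 * real n * pk K 1))
      = (\<Sum>j<d. nu K * (1 - (20/9) * (PKc j + P0 j) - 2 * real n * pk K 1))"
    by (rule sum.cong[OF refl]) (simp add: PK_eq algebra_simps)
  also have "\<dots> = nu K * (real d - (20/9) * (\<Sum>j<d. PKc j + P0 j) - 2 * real n * pk K 1 * real d)"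
    by (rule linS)
  finally have A: "nu K * (real d - (20/9) * (\<Sum>j<d. PKc j + P0 j) - 2 * real n * pk K 1 * real d) \<le> (\<Sum>i<n. Ei i)" .
  have "nu K * (real d - (20/9) * (real d * (26/75)) - 2 * real n * pk K 1 * real d) \<le>
      nu K * (real d - (20/9) * (\<Sum>j<d. PKc j + P0 j) - 2 * real n * pk K 1 * real d)"
    using err_sum nu_pos by (intro mult_left_mono) auto
  then show ?thesis using A by linarith
qed

end

context core begin

lemma upper_total: "(\<Sum>i<n. Ei i) \<le> real n * ((exp \<epsilon> - 1) * sqrt (real d * vb) + 2 * \<delta> * TT + 2 * (vb / nu K))"
proof -
  have "(\<Sum>i<n. Ei i) \<le> (\<Sum>i<n. (exp \<epsilon> - 1) * sqrt (real d * vb) + 2 * \<delta> * TT + 2 * (vb / nu K))"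
    by (intro sum_mono row_bound) auto
  then show ?thesis by simp
qed

lemma contradiction:
  assumes e1: "\<epsilon> \<le> 1" and a1: "1000 * real n * \<epsilon> \<le> sqrt (real d)"
    and a2: "1000 * real n * \<delta> \<le> 1" and a3: "60000 * real n \<le> real d"
  shows False
proof -
  define v where "v = nu K"
  define s where "s = sqrt (real d)"
  have v0: "0 < v" using nu_pos by (simp add: v_def)
  have s2: "s * s = real d" by (simp add: s_def)
  have s0: "0 \<le> s" by (simp add: s_def)
  have Kr: "real K = 10 * real n" using K_def by simp
  have n1r: "1 \<le> real n" using n1 by simp
  have dpos: "0 < real d" using d1 by simp
  have vK: "1 / real K \<le> 10 * v"
  proof -
    have "real K - 1 \<le> real K" by simp
    then have "10 * (real K - 1) \<le> 10 * real K" by simp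
    moreover have "0 < 10 * (real K - 1)" using K2 by simp
    ultimately have "1 / (10 * real K) \<le> 1 / (10 * (real K - 1))" by (intro divide_left_mono) auto
    then show ?thesis using K2 by (simp add: v_def nu_def field_simps)
  qed
  have vbv: "vb \<le> 960 * v^2"
  proof -
    have "vb = 96 * v * (1 / real K)" by (simp add: vb_def v_def)
    also have "\<dots> \<le> 96 * v * (10 * v)" using vK v0 by (intro mult_left_mono) auto
    finally show ?thesis by (simp add: power2_eq_square)
  qed
  have svb: "sqrt vb \<le> 31 * v"
  proof -
    have X: "(31 * v)^2 = 961 * (v * v)" by (simp add: power2_eq_square)
    have Y: "vb \<le> 960 * (v * v)" using vbv by (simp add: power2_eq_square)
    have Z: "0 \<le> v * v" by simp
    have "vb \<le> (31 * v)^2" using X Y Z by linarith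
    then show ?thesis using v0 by (intro real_le_lsqrt) auto
  qed
  have vbnu: "vb / nu K \<le> 960 * v"
  proof -
    have "vb / nu K = 96 * (1 / real K)" using v0 by (simp add: vb_def v_def)
    also have "\<dots> \<le> 96 * (10 * v)" using vK by simp
    finally show ?thesis by simp
  qed
  have ee: "exp \<epsilon> - 1 \<le> 2 * \<epsilon>"
  proof -
    have "exp \<epsilon> \<le> 1 + \<epsilon> + \<epsilon>^2" by (rule exp_bound) (use ep e1 in auto)
    moreover have "\<epsilon>^2 \<le> \<epsilon>" using ep e1 by (simp add: power2_eq_square mult_left_le_one_le)
    ultimately show ?thesis by simp
  qed
  have pk1: "2 * real n * pk K 1 \<le> 6 / 100"
  proof -
    have "pk K 1 \<le> 3 / (real K)^2" using pk_1_bound K2 by simp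
    also have "\<dots> = 3 / (100 * real n * real n)" by (simp add: Kr power2_eq_square)
    finally have "2 * real n * pk K 1 \<le> 2 * real n * (3 / (100 * real n * real n))"
      using n1r by (intro mult_left_mono) auto
    also have "\<dots> = 6 / (100 * real n)" using n1r by (simp add: field_simps)
    also have "\<dots> \<le> 6 / 100" using n1r by (simp add: field_simps)
    finally show ?thesis .
  qed
  have low: "(\<Sum>i<n. Ei i) \<ge> v * (real d * (31/135 - 6/100))"
  proof -
    have "real d - (20/9) * (real d * (26/75)) - 2 * real n * pk K 1 * real d \<ge> real d * (31/135 - 6/100)"
    proof -
      have "2 * real n * pk K 1 * real d \<le> 6/100 * real d" using pk1 dpos by (intro mult_right_mono) auto
      then show ?thesis by (simp add: algebra_simps)
    qed
    then have "v * (real d * (31/135 - 6/100)) \<le> v * (real d - (20/9) * (real d * (26/75)) - 2 * real n * pk K 1 * real d)"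
      using v0 by (intro mult_left_mono) auto
    then show ?thesis using S_lower by (simp add: v_def)
  qed
  have t1: "(exp \<epsilon> - 1) * sqrt (real d * vb) \<le> 2 * \<epsilon> * (31 * v * s)"
  proof -
    have "sqrt (real d * vb) = s * sqrt vb" by (simp add: s_def real_sqrt_mult)
    also have "\<dots> \<le> s * (31 * v)" using svb s0 by (intro mult_left_mono) auto
    finally have A: "sqrt (real d * vb) \<le> 31 * v * s" by (simp add: mult_ac)
    have B: "0 \<le> exp \<epsilon> - 1" using ep by simp
    show ?thesis by (rule mult_mono[OF ee A]) (use ep vb_nonneg in auto)
  qed
  have t2: "TT \<le> real d * (32 * v)" using svb by (simp add: TT_def v_def[symmetric]) (intro mult_left_mono, auto)
  have up: "(\<Sum>i<n. Ei i) \<le> real n * (2 * \<epsilon> * (31 * v * s) + 2 * \<delta> * (real d * (32 * v)) + 2 * (960 * v))"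
  proof -
    have "(exp \<epsilon> - 1) * sqrt (real d * vb) + 2 * \<delta> * TT + 2 * (vb / nu K) \<le> 2 * \<epsilon> * (31 * v * s) + 2 * \<delta> * (real d * (32 * v)) + 2 * (960 * v)"
    proof -
      have f2: "2 * \<delta> * TT \<le> 2 * \<delta> * (real d * (32 * v))" using mult_left_mono[OF t2, of "2 * \<delta>"] dl by simp
      show ?thesis using t1 f2 vbnu by linarith
    qed
    then show ?thesis using upper_total n1r by (smt (verit) mult_left_mono of_nat_0_le_iff)
  qed
  have c1: "real n * (2 * \<epsilon> * (31 * v * s)) \<le> v * (62 / 1000 * real d)"
  proof -
    have "real n * (2 * \<epsilon> * (31 * v * s)) = 62 * v * s * (real n * \<epsilon>)" by (simp add: algebra_simps)
    also have "\<dots> \<le> 62 * v * s * (s / 1000)" using a1 v0 s0 by (intro mult_left_mono) (auto simp: s_def)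
    also have "\<dots> = v * (62 / 1000 * real d)" using s2 by (simp add: algebra_simps)
    finally show ?thesis .
  qed
  have c2: "real n * (2 * \<delta> * (real d * (32 * v))) \<le> v * (64 / 1000 * real d)"
  proof -
    have "real n * (2 * \<delta> * (real d * (32 * v))) = 64 * v * real d * (real n * \<delta>)" by (simp add: algebra_simps)
    also have "\<dots> \<le> 64 * v * real d * (1 / 1000)" using a2 v0 dpos by (intro mult_left_mono) auto
    finally show ?thesis by simp
  qed
  have c3: "real n * (2 * (960 * v)) \<le> v * (32 / 1000 * real d)"
  proof -
    have "real n * (2 * (960 * v)) = v * (1920 * real n)" by simp
    also have "\<dots> \<le> v * (32 / 1000 * real d)" using a3 v0 by (intro mult_left_mono) auto
    finally show ?thesis .
  qed
  have "v * (real d * (31/135 - 6/100)) \<le> v * (62 / 1000 * real d) + v * (64 / 1000 * real d) + v * (32 / 1000 * real d)"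
    using low up c1 c2 c3 by (simp add: algebra_simps)
  then have "v * (real d * (31/135 - 6/100)) \<le> v * (real d * (158 / 1000))" by (simp add: algebra_simps)
  then have "real d * (31/135 - 6/100) \<le> real d * (158 / 1000)" using v0 by simp
  then show False using dpos by simp
qed

end

definition goodq :: "nat \<Rightarrow> nat \<Rightarrow> ((nat \<Rightarrow> nat \<Rightarrow> bool) \<Rightarrow> (nat \<Rightarrow> bool) \<Rightarrow> real) \<Rightarrow> real \<Rightarrow> real \<Rightarrow> bool" where
  "goodq n d q \<epsilon> \<delta> \<longleftrightarrow>
     (\<forall>Y\<in>datasets n d. \<forall>u\<in>Os d. 0 \<le> q Y u) \<and>
     (\<forall>Y\<in>datasets n d. sum (q Y) (Os d) = 1) \<and>
     (\<forall>Y Y' R. neighbors n d Y Y' \<longrightarrow> R \<subseteq> Os d \<longrightarrow> sum (q Y) R \<le> exp \<epsilon> * sum (q Y') R + \<delta>) \<and>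
     (\<forall>Y\<in>datasets n d. (\<Sum>u\<in>Os d. q Y u * real (Err n d Y u)) \<le> real d * (26/75))"

lemma core_thm:
  assumes "goodq n d q \<epsilon> \<delta>" "1 \<le> n" "1 \<le> d" "0 \<le> \<epsilon>" "\<epsilon> \<le> 1" "0 \<le> \<delta>"
    "1000 * real n * \<epsilon> \<le> sqrt (real d)" "1000 * real n * \<delta> \<le> 1" "60000 * real n \<le> real d"
  shows False
proof -
  interpret core n "10 * n" d q \<epsilon> \<delta>
    using assms unfolding goodq_def by unfold_locales auto
  show False by (rule contradiction) (use assms in auto)
qed

lemma group_priv:
  assumes fin: "finite L" and q: "goodq n d q \<epsilon> \<delta>" and ep: "0 \<le> \<epsilon>" and dl: "0 \<le> \<delta>"
  shows "\<And>Y Y'. Y \<in> datasets n d \<Longrightarrow> Y' \<in> datasets n d \<Longrightarrow> L \<subseteq> {..<n} \<Longrightarrow>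
     (\<forall>i j. i \<notin> L \<longrightarrow> Y i j = Y' i j) \<Longrightarrow> R \<subseteq> Os d \<Longrightarrow>
     sum (q Y) R \<le> exp (real (card L) * \<epsilon>) * sum (q Y') R + real (card L) * exp (real (card L) * \<epsilon>) * \<delta>"
  using fin
proof (induction L rule: finite_induct)
  case empty
  then have "Y = Y'" by (auto simp: fun_eq_iff)
  then show ?case by simp
next
  case (insert l L0)
  define Z where "Z = (\<lambda>i j. if i = l then Y' i j else Y i j)"
  have Zd: "Z \<in> datasets n d" using insert.prems(1,2) by (auto simp: Z_def datasets_def)
  have l: "l < n" using insert.prems(3) by auto
  have nb: "neighbors n d Y Z" unfolding neighbors_def using insert.prems(1) Zd l
    by (auto simp: Z_def intro!: exI[of _ l])
  have IH: "sum (q Z) R \<le> exp (real (card L0) * \<epsilon>) * sum (q Y') R + real (card L0) * exp (real (card L0) * \<epsilon>) * \<delta>"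
    by (rule insert.IH) (use Zd insert.prems in \<open>auto simp: Z_def\<close>)
  have step: "sum (q Y) R \<le> exp \<epsilon> * sum (q Z) R + \<delta>"
    using q nb insert.prems(5) unfolding goodq_def by blast
  define m where "m = real (card L0)"
  have cL: "real (card (insert l L0)) = m + 1" using insert.hyps by (simp add: m_def)
  have S0: "0 \<le> sum (q Y') R"
    using q insert.prems(2,5) unfolding goodq_def by (intro sum_nonneg) auto
  have e: "exp \<epsilon> * exp (m * \<epsilon>) = exp ((m + 1) * \<epsilon>)" by (simp add: exp_add[symmetric] algebra_simps)
  have "sum (q Y) R \<le> exp \<epsilon> * (exp (m * \<epsilon>) * sum (q Y') R + m * exp (m * \<epsilon>) * \<delta>) + \<delta>"
  proof -
    have X: "exp \<epsilon> * sum (q Z) R \<le> exp \<epsilon> * (exp (real (card L0) * \<epsilon>) * sum (q Y') R + real (card L0) * exp (real (card L0) * \<epsilon>) * \<delta>)"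
      by (rule mult_left_mono[OF IH]) simp
    show ?thesis unfolding m_def using step X by linarith
  qed
  also have "\<dots> = exp ((m + 1) * \<epsilon>) * sum (q Y') R + m * exp ((m + 1) * \<epsilon>) * \<delta> + \<delta>"
    using e by (simp add: algebra_simps)
  finally have A: "sum (q Y) R \<le> exp ((m + 1) * \<epsilon>) * sum (q Y') R + m * exp ((m + 1) * \<epsilon>) * \<delta> + \<delta>" .
  have B: "\<delta> \<le> exp ((m + 1) * \<epsilon>) * \<delta>" using dl ep
    by (simp add: mult_le_cancel_right1 m_def)
  have C: "(m + 1) * exp ((m + 1) * \<epsilon>) * \<delta> = m * exp ((m + 1) * \<epsilon>) * \<delta> + exp ((m + 1) * \<epsilon>) * \<delta>"
    by (simp add: algebra_simps)
  have "sum (q Y) R \<le> exp ((m + 1) * \<epsilon>) * sum (q Y') R + (m + 1) * exp ((m + 1) * \<epsilon>) * \<delta>"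
    using A B C by linarith
  then show ?case using cL by simp
qed


definition Edup :: "nat \<Rightarrow> nat \<Rightarrow> (nat \<Rightarrow> nat \<Rightarrow> bool) \<Rightarrow> nat \<Rightarrow> nat \<Rightarrow> bool" where
  "Edup n m X = (\<lambda>i j. i < n \<and> X (i div m) j)"

lemma Edup_datasets: "X \<in> datasets n' d \<Longrightarrow> Edup n m X \<in> datasets n d"
  by (auto simp: Edup_def datasets_def)

lemma div_block:
  fixes i m l :: nat
  assumes "0 < m" "i div m = l"
  shows "l * m \<le> i \<and> i < l * m + m"
proof -
  have e: "i = l * m + i mod m" using assms(2) by (metis div_mult_mod_eq)
  have "i mod m < m" using assms by simp
  then show ?thesis using e by linarith
qed

lemma card_block:
  assumes "0 < m"
  shows "card {i. i < n \<and> i div m = l} \<le> m"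
proof -
  have "{i. i < n \<and> i div m = l} \<subseteq> {l*m..<l*m+m}" using div_block[OF assms] by auto
  then have "card {i. i < n \<and> i div m = l} \<le> card {l*m..<l*m+m}" by (intro card_mono) auto
  then show ?thesis by simp
qed

lemma Err_Edup:
  assumes m: "1 \<le> m" and n1: "n \<le> n' * m" and n2: "(n' - 1) * m < n"
  shows "Err n d (Edup n m X) u = Err n' d X u"
proof -
  have allc: "(\<forall>i<n. P (i div m)) \<longleftrightarrow> (\<forall>l<n'. P l)" for P
  proof
    assume A: "\<forall>i<n. P (i div m)"
    show "\<forall>l<n'. P l"
    proof (intro allI impI)
      fix l assume l: "l < n'"
      have "l * m \<le> (n' - 1) * m" using l by (intro mult_right_mono) auto
      then have "l * m < n" using n2 by linarith
      moreover have "l * m div m = l" using m by simp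
      ultimately show "P l" using A by metis
    qed
  next
    assume B: "\<forall>l<n'. P l"
    show "\<forall>i<n. P (i div m)"
    proof (intro allI impI)
      fix i assume i: "i < n"
      then have "i < n' * m" using n1 by linarith
      then have "i div m < n'" using m by (simp add: div_less_iff_less_mult)
      then show "P (i div m)" using B by blast
    qed
  qed
  have "{j\<in>{..<d}. ((\<forall>i<n. Edup n m X i j) \<and> \<not> u j) \<or> ((\<forall>i<n. \<not> Edup n m X i j) \<and> u j)}
      = {j\<in>{..<d}. ((\<forall>i<n'. X i j) \<and> \<not> u j) \<or> ((\<forall>i<n'. \<not> X i j) \<and> u j)}"
    using allc[of "\<lambda>l. X l j" for j] allc[of "\<lambda>l. \<not> X l j" for j] by (auto simp: Edup_def)
  then show ?thesis by (simp add: Err_def)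
qed

lemma dup_good:
  assumes q: "goodq n d q \<epsilon> \<delta>" and m: "1 \<le> m" and n1: "n \<le> n' * m" and n2: "(n' - 1) * m < n"
    and ep: "0 \<le> \<epsilon>" and dl: "0 \<le> \<delta>"
  shows "goodq n' d (\<lambda>X. q (Edup n m X)) (real m * \<epsilon>) (real m * exp (real m * \<epsilon>) * \<delta>)"
  unfolding goodq_def
proof (intro conjI ballI allI impI)
  fix X u assume X: "X \<in> datasets n' d" and u: "u \<in> Os d"
  show "0 \<le> q (Edup n m X) u" using q Edup_datasets[OF X] u unfolding goodq_def by blast
next
  fix X assume X: "X \<in> datasets n' d"
  show "sum (q (Edup n m X)) (Os d) = 1" using q Edup_datasets[OF X] unfolding goodq_def by blast
next
  fix X assume X: "X \<in> datasets n' d"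
  show "(\<Sum>u\<in>Os d. q (Edup n m X) u * real (Err n' d X u)) \<le> real d * (26/75)"
    using q Edup_datasets[OF X] Err_Edup[OF m n1 n2] unfolding goodq_def by (metis (no_types, lifting) sum.cong)
next
  fix X X' R assume nb: "neighbors n' d X X'" and R: "R \<subseteq> Os d"
  obtain l where l: "l < n'" "\<forall>i'. i' \<noteq> l \<longrightarrow> (\<forall>j. X i' j = X' i' j)" and Xd: "X \<in> datasets n' d" "X' \<in> datasets n' d"
    using nb unfolding neighbors_def by blast
  define L where "L = {i. i < n \<and> i div m = l}"
  have fin: "finite L" by (simp add: L_def)
  have Lsub: "L \<subseteq> {..<n}" by (auto simp: L_def)
  have agree: "\<forall>i j. i \<notin> L \<longrightarrow> Edup n m X i j = Edup n m X' i j"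
    using l(2) by (auto simp: L_def Edup_def)
  have cL: "card L \<le> m" unfolding L_def by (rule card_block) (use m in simp)
  have G: "sum (q (Edup n m X)) R \<le> exp (real (card L) * \<epsilon>) * sum (q (Edup n m X')) R + real (card L) * exp (real (card L) * \<epsilon>) * \<delta>"
    by (rule group_priv[OF fin q ep dl Edup_datasets[OF Xd(1)] Edup_datasets[OF Xd(2)] Lsub agree R])
  have S0: "0 \<le> sum (q (Edup n m X')) R"
    using q Edup_datasets[OF Xd(2)] R unfolding goodq_def by (intro sum_nonneg) blast
  have e: "exp (real (card L) * \<epsilon>) \<le> exp (real m * \<epsilon>)" using cL ep by (simp add: mult_right_mono)
  have "exp (real (card L) * \<epsilon>) * sum (q (Edup n m X')) R \<le> exp (real m * \<epsilon>) * sum (q (Edup n m X')) R"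
    using e S0 by (rule mult_right_mono)
  moreover have "real (card L) * exp (real (card L) * \<epsilon>) * \<delta> \<le> real m * exp (real m * \<epsilon>) * \<delta>"
    using cL e dl by (intro mult_right_mono mult_mono) auto
  ultimately show "sum (q (Edup n m X)) R \<le> exp (real m * \<epsilon>) * sum (q (Edup n m X')) R + real m * exp (real m * \<epsilon>) * \<delta>"
    using G by linarith
qed


definition Ev :: "real \<Rightarrow> nat \<Rightarrow> (nat \<Rightarrow> bool) \<Rightarrow> (nat \<Rightarrow> real) set" where
  "Ev \<alpha> d u = {a \<in> space (out_space d). \<forall>j<d. (\<alpha> < a j) = u j}"

lemma Ev_sets: "Ev \<alpha> d u \<in> sets (out_space d)"
proof -
  have "Ev \<alpha> d u = {a \<in> space (out_space d). \<forall>j\<in>{..<d}. (u j \<longrightarrow> \<alpha> < a j) \<and> (\<not> u j \<longrightarrow> a j \<le> \<alpha>)}"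
    unfolding Ev_def by (auto; meson lessThan_iff not_le)
  also have "\<dots> \<in> sets (out_space d)"
    unfolding out_space_def by measurable
  finally show ?thesis .
qed


definition qM :: "((nat \<Rightarrow> nat \<Rightarrow> bool) \<Rightarrow> (nat \<Rightarrow> real) measure) \<Rightarrow> real \<Rightarrow> nat \<Rightarrow> (nat \<Rightarrow> nat \<Rightarrow> bool) \<Rightarrow> (nat \<Rightarrow> bool) \<Rightarrow> real" where
  "qM M \<alpha> d Y u = measure (M Y) (Ev \<alpha> d u)"

lemma Ev_disj: "disjoint_family_on (Ev \<alpha> d) (Os d)"
  unfolding disjoint_family_on_def
proof (intro ballI impI)
  fix u u' assume u: "u \<in> Os d" and u': "u' \<in> Os d" and ne: "u \<noteq> u'"
  then obtain j where j: "j < d" "u j \<noteq> u' j"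
    by (auto simp: Os_def PiE_def extensional_def fun_eq_iff)
  show "Ev \<alpha> d u \<inter> Ev \<alpha> d u' = {}" using j by (auto simp: Ev_def)
qed

lemma Ev_cover: "(\<Union>u\<in>Os d. Ev \<alpha> d u) = space (out_space d)"
proof
  show "(\<Union>u\<in>Os d. Ev \<alpha> d u) \<subseteq> space (out_space d)" by (auto simp: Ev_def)
next
  show "space (out_space d) \<subseteq> (\<Union>u\<in>Os d. Ev \<alpha> d u)"
  proof
    fix a assume a: "a \<in> space (out_space d)"
    have "restrict (\<lambda>j. \<alpha> < a j) {..<d} \<in> Os d" by (simp add: Os_def)
    moreover have "a \<in> Ev \<alpha> d (restrict (\<lambda>j. \<alpha> < a j) {..<d})" using a by (simp add: Ev_def)
    ultimately show "a \<in> (\<Union>u\<in>Os d. Ev \<alpha> d u)" by blast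
  qed
qed

lemma UEv_sets: "(\<Union>u\<in>R. Ev \<alpha> d u) \<in> sets (out_space d)" if "R \<subseteq> Os d"
proof -
  have "finite R" using that finite_Os by (rule finite_subset)
  then show ?thesis using Ev_sets by (intro sets.finite_UN) auto
qed

lemma sum_qM:
  assumes mech: "is_mechanism n d M" and Y: "Y \<in> datasets n d" and R: "R \<subseteq> Os d"
  shows "sum (qM M \<alpha> d Y) R = measure (M Y) (\<Union>u\<in>R. Ev \<alpha> d u)"
proof -
  have P: "prob_space (M Y)" and S: "sets (M Y) = sets (out_space d)" using mech Y by (auto simp: is_mechanism_def)
  have fin: "finite R" using R finite_Os by (rule finite_subset)
  have "measure (M Y) (\<Union>u\<in>R. Ev \<alpha> d u) = (\<Sum>u\<in>R. measure (M Y) (Ev \<alpha> d u))"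
    by (rule finite_measure.finite_measure_finite_Union[OF prob_space.finite_measure[OF P] fin])
       (use Ev_sets S disjoint_family_on_mono[OF R Ev_disj] in auto)
  then show ?thesis by (simp add: qM_def)
qed

lemma acc_err:
  assumes Y: "Y \<in> datasets n d" and n1: "1 \<le> n" and eta: "1 \<le> \<eta>" and al: "\<eta> * \<alpha> < 1/2"
    and acc: "output_accurate n d \<eta> \<alpha> \<beta> Y a" and beta: "\<beta> \<le> 1/75"
  shows "real (Err n d Y (restrict (\<lambda>j. \<alpha> < a j) {..<d})) \<le> real d / 75"
proof -
  define Acc where "Acc = {j\<in>{..<d}. (1/\<eta>) * col_mean n Y j - \<alpha> \<le> a j \<and> a j \<le> \<eta> * col_mean n Y j + \<alpha>}"
  define ES where "ES = {j\<in>{..<d}. ((\<forall>i<n. Y i j) \<and> \<not> restrict (\<lambda>j. \<alpha> < a j) {..<d} j) \<or> ((\<forall>i<n. \<not> Y i j) \<and> restrict (\<lambda>j. \<alpha> < a j) {..<d} j)}"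
  have cA: "real (card Acc) \<ge> (1 - 1/75) * real d"
  proof -
    have "(1 - 1/75) * real d \<le> (1 - \<beta>) * real d" using beta by (intro mult_right_mono) auto
    also have "\<dots> \<le> real (card Acc)" using acc by (simp add: output_accurate_def Acc_def)
    finally show ?thesis .
  qed
  have key: "2 * \<alpha> < 1 / \<eta>" using eta al by (simp add: field_simps)
  have sub: "ES \<subseteq> {..<d} - Acc"
  proof
    fix j assume j: "j \<in> ES"
    then have jd: "j < d" by (simp add: ES_def)
    show "j \<in> {..<d} - Acc"
    proof (cases "\<forall>i<n. Y i j")
      case True
      have "(\<Sum>i<n. if Y i j then 1 else 0) = (\<Sum>i<n. (1::real))" using True by (intro sum.cong) auto
      then have cm: "col_mean n Y j = 1" using n1 by (simp add: col_mean_def)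
      have "\<not> \<alpha> < a j" using j True jd n1 by (auto simp: ES_def)
      then show ?thesis using jd cm key by (auto simp: Acc_def)
    next
      case False
      then have F: "\<forall>i<n. \<not> Y i j" "\<alpha> < a j" using j jd by (auto simp: ES_def)
      have "(\<Sum>i<n. if Y i j then 1 else 0) = (\<Sum>i<n. (0::real))" using F by (intro sum.cong) auto
      then have cm: "col_mean n Y j = 0" by (simp add: col_mean_def)
      show ?thesis using jd cm F by (auto simp: Acc_def)
    qed
  qed
  have "card ES \<le> card ({..<d} - Acc)" using sub by (intro card_mono) auto
  also have "card ({..<d} - Acc) = d - card Acc" by (subst card_Diff_subset) (auto simp: Acc_def)
  finally have c1: "card ES \<le> d - card Acc" .
  have "card Acc \<le> card {..<d}" by (intro card_mono) (auto simp: Acc_def)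
  then have "real (d - card Acc) = real d - real (card Acc)" by (simp add: of_nat_diff)
  then have "real (card ES) \<le> real d - real (card Acc)" using c1 by (metis of_nat_le_iff)
  then have "real (card ES) \<le> real d / 75" using cA by simp
  then show ?thesis by (simp add: Err_def ES_def)
qed


lemma mech_good:
  assumes mech: "is_mechanism n d M" and dp: "differentially_private n d \<epsilon> \<delta> M"
    and acc: "mechanism_accurate n d \<eta> \<alpha> \<beta> M" and beta: "\<beta> \<le> 1/75"
    and n1: "1 \<le> n" and eta: "1 \<le> \<eta>" and al: "\<eta> * \<alpha> < 1/2"
  shows "goodq n d (qM M \<alpha> d) \<epsilon> (max \<delta> 0)"
  unfolding goodq_def
proof (intro conjI ballI allI impI)
  fix Y u show "0 \<le> qM M \<alpha> d Y u" by (simp add: qM_def)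
next
  fix Y assume Y: "Y \<in> datasets n d"
  have P: "prob_space (M Y)" and S: "sets (M Y) = sets (out_space d)" using mech Y by (auto simp: is_mechanism_def)
  have sp: "space (M Y) = space (out_space d)" using S by (rule sets_eq_imp_space_eq)
  show "sum (qM M \<alpha> d Y) (Os d) = 1"
    using sum_qM[OF mech Y order_refl] Ev_cover prob_space.prob_space[OF P] sp by simp
next
  fix Y Y' R assume nb: "neighbors n d Y Y'" and R: "R \<subseteq> Os d"
  have Y: "Y \<in> datasets n d" "Y' \<in> datasets n d" using nb by (auto simp: neighbors_def)
  have "measure (M Y) (\<Union>u\<in>R. Ev \<alpha> d u) \<le> exp \<epsilon> * measure (M Y') (\<Union>u\<in>R. Ev \<alpha> d u) + \<delta>"
    using dp nb UEv_sets[OF R] unfolding differentially_private_def by blast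
  then show "sum (qM M \<alpha> d Y) R \<le> exp \<epsilon> * sum (qM M \<alpha> d Y') R + max \<delta> 0"
    using sum_qM[OF mech Y(1) R] sum_qM[OF mech Y(2) R] by simp
next
  fix Y assume Y: "Y \<in> datasets n d"
  have P: "prob_space (M Y)" and S: "sets (M Y) = sets (out_space d)" using mech Y by (auto simp: is_mechanism_def)
  have sp: "space (M Y) = space (out_space d)" using S by (rule sets_eq_imp_space_eq)
  define G where "G = {u\<in>Os d. real (Err n d Y u) \<le> real d / 75}"
  define x where "x = sum (qM M \<alpha> d Y) G"
  have GO: "G \<subseteq> Os d" by (auto simp: G_def)
  have q0: "0 \<le> qM M \<alpha> d Y u" for u by (simp add: qM_def)
  have tot: "sum (qM M \<alpha> d Y) (Os d) = 1"
    using sum_qM[OF mech Y order_refl] Ev_cover prob_space.prob_space[OF P] sp by simp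
  have rest: "sum (qM M \<alpha> d Y) (Os d - G) = 1 - x"
    using tot sum.subset_diff[OF GO finite_Os, of "qM M \<alpha> d Y"] by (simp add: x_def)
  have x_ge: "2/3 \<le> x"
  proof -
    have "2/3 \<le> measure (M Y) {a \<in> space (M Y). output_accurate n d \<eta> \<alpha> \<beta> Y a}"
      using acc Y unfolding mechanism_accurate_def by blast
    also have "\<dots> \<le> measure (M Y) (\<Union>u\<in>G. Ev \<alpha> d u)"
    proof (rule finite_measure.finite_measure_mono[OF prob_space.finite_measure[OF P]])
      show "(\<Union>u\<in>G. Ev \<alpha> d u) \<in> sets (M Y)" using UEv_sets[OF GO] S by simp
      show "{a \<in> space (M Y). output_accurate n d \<eta> \<alpha> \<beta> Y a} \<subseteq> (\<Union>u\<in>G. Ev \<alpha> d u)"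
      proof
        fix a assume a: "a \<in> {a \<in> space (M Y). output_accurate n d \<eta> \<alpha> \<beta> Y a}"
        define u where "u = restrict (\<lambda>j. \<alpha> < a j) {..<d}"
        have "u \<in> G" unfolding G_def u_def using acc_err[OF Y n1 eta al _ beta] a by (simp add: Os_def)
        moreover have "a \<in> Ev \<alpha> d u" using a sp by (simp add: Ev_def u_def)
        ultimately show "a \<in> (\<Union>u\<in>G. Ev \<alpha> d u)" by blast
      qed
    qed
    also have "\<dots> = x" using sum_qM[OF mech Y GO] by (simp add: x_def)
    finally show ?thesis .
  qed
  have errd: "real (Err n d Y u) \<le> real d" for u
  proof -
    have "Err n d Y u \<le> card {..<d}" unfolding Err_def by (intro card_mono) auto
    then show ?thesis by simp
  qed
  have "(\<Sum>u\<in>Os d. qM M \<alpha> d Y u * real (Err n d Y u)) =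
      (\<Sum>u\<in>G. qM M \<alpha> d Y u * real (Err n d Y u)) + (\<Sum>u\<in>Os d - G. qM M \<alpha> d Y u * real (Err n d Y u))"
    using sum.subset_diff[OF GO finite_Os] by (simp add: add.commute)
  also have "(\<Sum>u\<in>G. qM M \<alpha> d Y u * real (Err n d Y u)) \<le> (\<Sum>u\<in>G. qM M \<alpha> d Y u * (real d / 75))"
    by (intro sum_mono mult_left_mono q0) (auto simp: G_def)
  also have "(\<Sum>u\<in>Os d - G. qM M \<alpha> d Y u * real (Err n d Y u)) \<le> (\<Sum>u\<in>Os d - G. qM M \<alpha> d Y u * real d)"
    by (intro sum_mono mult_left_mono q0 errd)
  also have "(\<Sum>u\<in>G. qM M \<alpha> d Y u * (real d / 75)) + (\<Sum>u\<in>Os d - G. qM M \<alpha> d Y u * real d) = x * (real d / 75) + (1 - x) * real d"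
  proof -
    have a: "(\<Sum>u\<in>G. qM M \<alpha> d Y u * (real d / 75)) = x * (real d / 75)"
      unfolding x_def by (rule sum_distrib_right[symmetric])
    have b: "(\<Sum>u\<in>Os d - G. qM M \<alpha> d Y u * real d) = sum (qM M \<alpha> d Y) (Os d - G) * real d"
      by (rule sum_distrib_right[symmetric])
    show ?thesis using a b rest by simp
  qed
  also have "\<dots> \<le> real d * (26/75)"
  proof -
    have x1: "x \<le> 1" using rest q0 sum_nonneg[of "Os d - G" "qM M \<alpha> d Y"] by simp
    have "x * (real d / 75) \<le> real d / 75" using mult_right_mono[OF x1, of "real d / 75"] by simp
    moreover have "(1 - x) * real d \<le> (1/3) * real d" using x_ge by (intro mult_right_mono) auto
    ultimately show ?thesis by simp
  qed
  finally show "(\<Sum>u\<in>Os d. qM M \<alpha> d Y u * real (Err n d Y u)) \<le> real d * (26/75)" by simp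
qed


lemma reduce:
  assumes q: "goodq n d q \<epsilon> \<delta>" and ep: "0 \<le> \<epsilon>" and dl: "0 \<le> \<delta>" and m1: "1 \<le> m" and mn: "m \<le> n"
    and me: "real m * \<epsilon> \<le> 1" and d1: "1 \<le> d"
    and c1: "1000 * real ((n + m - 1) div m) * (real m * \<epsilon>) \<le> sqrt (real d)"
    and c2: "1000 * real ((n + m - 1) div m) * (real m * exp (real m * \<epsilon>) * \<delta>) \<le> 1"
    and c3: "60000 * real ((n + m - 1) div m) \<le> real d"
  shows False
proof -
  define n' where "n' = (n + m - 1) div m"
  have a: "n' * m \<le> n + m - 1" unfolding n'_def by (rule div_times_less_eq_dividend)
  have b: "n + m - 1 < n' * m + m" unfolding n'_def using m1
    by (metis add.commute div_mult_mod_eq mod_less_divisor nat_add_left_cancel_less zero_less_one less_le_trans)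
  have n1: "n \<le> n' * m" using b m1 by linarith
  have n2: "(n' - 1) * m < n" using a m1 mn by (simp add: diff_mult_distrib)
  have n'1: "1 \<le> n'" using n1 mn m1 by (cases n') auto
  have g: "goodq n' d (\<lambda>X. q (Edup n m X)) (real m * \<epsilon>) (real m * exp (real m * \<epsilon>) * \<delta>)"
    by (rule dup_good[OF q m1 n1 n2 ep dl])
  show False
    by (rule core_thm[OF g]) (use n'1 d1 ep dl me c1 c2 c3 in \<open>auto simp: n'_def\<close>)
qed


definition NN :: "nat \<Rightarrow> real \<Rightarrow> real" where
  "NN d \<epsilon> = (if 1000000 \<le> d then sqrt (real d) / (2000 * \<epsilon>) else 0)"

lemma main_no_acc:
  assumes e0: "0 < \<epsilon>" and e1: "\<epsilon> \<le> 1" and n1: "1 \<le> n" and nN: "real n \<le> NN d \<epsilon>"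
    and eta: "1 \<le> \<eta>" and al0: "0 \<le> \<alpha>" and al: "\<eta> * \<alpha> < 1/2" and dlt: "\<delta> \<le> (1/6000) / real n"
    and mech: "is_mechanism n d M" and dp: "differentially_private n d \<epsilon> \<delta> M"
    and acc: "mechanism_accurate n d \<eta> \<alpha> \<beta> M" and beta: "\<beta> \<le> 1/75"
  shows False
proof -
  have nr: "1 \<le> real n" using n1 by simp
  have dbig: "1000000 \<le> d"
  proof (rule ccontr)
    assume "\<not> 1000000 \<le> d"
    then have "NN d \<epsilon> = 0" by (simp add: NN_def)
    then show False using nN nr by simp
  qed
  have d1: "1 \<le> d" using dbig by simp
  define s where "s = sqrt (real d)"
  have s1000: "1000 \<le> s" unfolding s_def by (rule real_le_rsqrt) (use dbig in simp)
  have ss: "s * s = real d" by (simp add: s_def)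
  have ne: "real n * \<epsilon> \<le> s / 2000"
  proof -
    have "real n \<le> s / (2000 * \<epsilon>)" using nN dbig by (simp add: NN_def s_def)
    then have "real n * \<epsilon> \<le> s / (2000 * \<epsilon>) * \<epsilon>" using e0 by (intro mult_right_mono) auto
    also have "\<dots> = s / 2000" using e0 by simp
    finally show ?thesis .
  qed
  define \<delta>p where "\<delta>p = max \<delta> 0"
  have dp0: "0 \<le> \<delta>p" by (simp add: \<delta>p_def)
  have ndp: "real n * \<delta>p \<le> 1/6000"
  proof -
    have "\<delta>p \<le> (1/6000) / real n" using dlt nr by (simp add: \<delta>p_def)
    then have "real n * \<delta>p \<le> real n * ((1/6000) / real n)" using nr by (intro mult_left_mono) auto
    then show ?thesis using nr by simp
  qed
  have g: "goodq n d (qM M \<alpha> d) \<epsilon> \<delta>p"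
    unfolding \<delta>p_def by (rule mech_good[OF mech dp acc beta n1 eta al])
  have ep: "0 \<le> \<epsilon>" using e0 by simp
  show False
  proof (cases "real n * \<epsilon> \<le> 1")
    case True
    have dv: "(n + n - 1) div n = 1" using n1 by (intro div_nat_eqI) auto
    have ex: "exp (real n * \<epsilon>) \<le> 3"
    proof -
      have "exp (real n * \<epsilon>) \<le> exp 1" using True by simp
      then show ?thesis using exp_le by linarith
    qed
    show False
    proof (rule reduce[OF g ep dp0 n1 order_refl True d1])
      show "1000 * real ((n + n - 1) div n) * (real n * \<epsilon>) \<le> sqrt (real d)"
        unfolding dv using True s1000 by (simp add: s_def[symmetric])
      show "60000 * real ((n + n - 1) div n) \<le> real d" unfolding dv using dbig by simp
      have "real n * exp (real n * \<epsilon>) * \<delta>p = exp (real n * \<epsilon>) * (real n * \<delta>p)" by simp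
      also have "\<dots> \<le> 3 * (1/6000)" using ex ndp dp0 nr by (intro mult_mono) auto
      finally show "1000 * real ((n + n - 1) div n) * (real n * exp (real n * \<epsilon>) * \<delta>p) \<le> 1"
        unfolding dv by simp
    qed
  next
    case False
    define r where "r = 1 / \<epsilon>"
    have r1: "1 \<le> r" using e0 e1 by (simp add: r_def)
    define m where "m = nat \<lfloor>r\<rfloor>"
    have fl0: "1 \<le> \<lfloor>r\<rfloor>" using r1 by simp
    have mr: "real m = real_of_int \<lfloor>r\<rfloor>" using fl0 by (simp add: m_def)
    have mle: "real m \<le> r" using mr by simp
    have mgt: "r < real m + 1" using mr by linarith
    have m1: "1 \<le> m" using fl0 m_def by linarith
    have me: "real m * \<epsilon> \<le> 1" using mle e0 by (simp add: r_def field_simps)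
    have nr2: "r < real n" using False e0 by (simp add: r_def field_simps)
    have mn: "m < n" using mle nr2 by simp
    have m2e: "1 < 2 * (real m * \<epsilon>)"
    proof -
      have "1 < (real m + 1) * \<epsilon>" using mgt e0 by (simp add: r_def field_simps)
      moreover have "(real m + 1) * \<epsilon> \<le> 2 * real m * \<epsilon>" using m1 e0 by (intro mult_right_mono) auto
      ultimately show ?thesis by simp
    qed
    define n' where "n' = (n + m - 1) div m"
    have a: "n' * m \<le> n + m - 1" unfolding n'_def by (rule div_times_less_eq_dividend)
    have nm2: "real n' * real m \<le> 2 * real n"
    proof -
      have "n' * m \<le> 2 * n" using a mn by linarith
      then have "real (n' * m) \<le> real (2 * n)" by (simp only: of_nat_le_iff)
      then show ?thesis by simp
    qed
    have ex: "exp (real m * \<epsilon>) \<le> 3"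
    proof -
      have "exp (real m * \<epsilon>) \<le> exp 1" using me by simp
      then show ?thesis using exp_le by linarith
    qed
    have c1: "1000 * real n' * (real m * \<epsilon>) \<le> sqrt (real d)"
    proof -
      have "1000 * real n' * (real m * \<epsilon>) = 1000 * \<epsilon> * (real n' * real m)" by simp
      also have "\<dots> \<le> 1000 * \<epsilon> * (2 * real n)" using nm2 e0 by (intro mult_left_mono) auto
      also have "\<dots> = 2000 * (real n * \<epsilon>)" by simp
      also have "\<dots> \<le> 2000 * (s / 2000)" using ne by (intro mult_left_mono) auto
      finally show ?thesis by (simp add: s_def)
    qed
    have c2: "1000 * real n' * (real m * exp (real m * \<epsilon>) * \<delta>p) \<le> 1"
    proof -
      have "1000 * real n' * (real m * exp (real m * \<epsilon>) * \<delta>p) = 1000 * exp (real m * \<epsilon>) * ((real n' * real m) * \<delta>p)" by simp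
      also have "\<dots> \<le> 1000 * 3 * ((2 * real n) * \<delta>p)"
      proof -
        have X: "(real n' * real m) * \<delta>p \<le> (2 * real n) * \<delta>p" by (rule mult_right_mono[OF nm2 dp0])
        have Y: "exp (real m * \<epsilon>) * ((real n' * real m) * \<delta>p) \<le> 3 * ((2 * real n) * \<delta>p)"
          by (rule mult_mono[OF ex X]) (use dp0 in auto)
        then show ?thesis by linarith
      qed
      also have "\<dots> = 6000 * (real n * \<delta>p)" by simp
      also have "\<dots> \<le> 6000 * (1/6000)" using ndp by (intro mult_left_mono) auto
      finally show ?thesis by simp
    qed
    have c3: "60000 * real n' \<le> real d"
    proof -
      have "real n' \<le> real n' * (2 * (real m * \<epsilon>))" using m2e by (simp add: mult_le_cancel_left1)
      also have "\<dots> = 2 * \<epsilon> * (real n' * real m)" by simp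
      also have "\<dots> \<le> 2 * \<epsilon> * (2 * real n)" using nm2 e0 by (intro mult_left_mono) auto
      also have "\<dots> = 4 * (real n * \<epsilon>)" by simp
      also have "\<dots> \<le> 4 * (s / 2000)" using ne by simp
      finally have "60000 * real n' \<le> 120 * s" by simp
      also have "120 * s \<le> s * s" using s1000 by (intro mult_right_mono) auto
      finally show ?thesis using ss by simp
    qed
    show False
      by (rule reduce[OF g ep dp0 m1 less_imp_le[OF mn] me d1]) (use c1 c2 c3 in \<open>simp_all add: n'_def\<close>)
  qed
qed

lemma part1: "(0::real) < 2000 \<and> (\<forall>d\<ge>(1000000::nat). \<forall>\<epsilon>. 0 < \<epsilon> \<and> \<epsilon> \<le> 1 \<longrightarrow>
           sqrt (real d) / (2000 * \<epsilon> * (ln (real d + 2)) ^ 0) \<le> NN d \<epsilon> \<and>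
           NN d \<epsilon> \<le> 2000 * sqrt (real d) * (ln (real d + 2)) ^ 0 / \<epsilon>)"
proof (intro conjI allI impI)
  fix d :: nat and \<epsilon> :: real
  assume d: "1000000 \<le> d" and e: "0 < \<epsilon> \<and> \<epsilon> \<le> 1"
  show "sqrt (real d) / (2000 * \<epsilon> * (ln (real d + 2)) ^ 0) \<le> NN d \<epsilon>" using d by (simp add: NN_def)
  have "sqrt (real d) / (2000 * \<epsilon>) \<le> 2000 * sqrt (real d) / \<epsilon>"
    using e by (simp add: field_simps)
  then show "NN d \<epsilon> \<le> 2000 * sqrt (real d) * (ln (real d + 2)) ^ 0 / \<epsilon>" using d by (simp add: NN_def)
qed simp

theorem mainTheorem11:
  shows "\<exists>c::real. c > 0 \<and> (\<exists>N :: nat \<Rightarrow> real \<Rightarrow> real.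
     (\<exists>C::real. \<exists>k::nat. \<exists>d0::nat. C > 0 \<and>
        (\<forall>d\<ge>d0. \<forall>\<epsilon>. 0 < \<epsilon> \<and> \<epsilon> \<le> 1 \<longrightarrow>
           sqrt (real d) / (C * \<epsilon> * (ln (real d + 2)) ^ k) \<le> N d \<epsilon> \<and>
           N d \<epsilon> \<le> C * sqrt (real d) * (ln (real d + 2)) ^ k / \<epsilon>)) \<and>
     (\<forall>d \<epsilon> n \<eta> \<alpha> \<delta> M. 0 < \<epsilon> \<and> \<epsilon> \<le> 1 \<and> 1 \<le> n \<and> real n \<le> N d \<epsilon> \<and>
        1 \<le> \<eta> \<and> 0 \<le> \<alpha> \<and> \<alpha> \<le> 1 \<and> \<eta> * \<alpha> < 1/2 \<and> \<delta> \<le> c / real n \<and>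
        is_mechanism n d M \<and> differentially_private n d \<epsilon> \<delta> M \<longrightarrow>
          \<not> mechanism_accurate n d \<eta> \<alpha> (1/75) M \<and> \<not> mechanism_accurate n d \<eta> \<alpha> 0 M))"
proof -
  have A: "\<exists>C::real. \<exists>k::nat. \<exists>d0::nat. C > 0 \<and>
        (\<forall>d\<ge>d0. \<forall>\<epsilon>. 0 < \<epsilon> \<and> \<epsilon> \<le> 1 \<longrightarrow>
           sqrt (real d) / (C * \<epsilon> * (ln (real d + 2)) ^ k) \<le> NN d \<epsilon> \<and>
           NN d \<epsilon> \<le> C * sqrt (real d) * (ln (real d + 2)) ^ k / \<epsilon>)"
    by (rule exI[of _ 2000], rule exI[of _ 0], rule exI[of _ 1000000]) (rule part1)
  have B: "\<forall>(d::nat) (\<epsilon>::real) (n::nat) (\<eta>::real) (\<alpha>::real) (\<delta>::real) (M::(nat \<Rightarrow> nat \<Rightarrow> bool) \<Rightarrow> (nat \<Rightarrow> real) measure). 0 < \<epsilon> \<and> \<epsilon> \<le> 1 \<and> 1 \<le> n \<and> real n \<le> NN d \<epsilon> \<and>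
        1 \<le> \<eta> \<and> 0 \<le> \<alpha> \<and> \<alpha> \<le> 1 \<and> \<eta> * \<alpha> < 1/2 \<and> \<delta> \<le> (1/6000) / real n \<and>
        is_mechanism n d M \<and> differentially_private n d \<epsilon> \<delta> M \<longrightarrow>
          \<not> mechanism_accurate n d \<eta> \<alpha> (1/75) M \<and> \<not> mechanism_accurate n d \<eta> \<alpha> 0 M"
  proof (intro allI impI conjI notI)
    fix d :: nat and \<epsilon> :: real and n :: nat and \<eta> \<alpha> \<delta> :: real and M :: "(nat \<Rightarrow> nat \<Rightarrow> bool) \<Rightarrow> (nat \<Rightarrow> real) measure"
    assume H: "0 < \<epsilon> \<and> \<epsilon> \<le> 1 \<and> 1 \<le> n \<and> real n \<le> NN d \<epsilon> \<and>
        1 \<le> \<eta> \<and> 0 \<le> \<alpha> \<and> \<alpha> \<le> 1 \<and> \<eta> * \<alpha> < 1/2 \<and> \<delta> \<le> (1/6000) / real n \<and>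
        is_mechanism n d M \<and> differentially_private n d \<epsilon> \<delta> M"
    {
      assume "mechanism_accurate n d \<eta> \<alpha> (1/75) M"
      then show False using H by (intro main_no_acc[of \<epsilon> n d \<eta> \<alpha> \<delta> M "1/75"]) auto
    next
      assume "mechanism_accurate n d \<eta> \<alpha> 0 M"
      then show False using H by (intro main_no_acc[of \<epsilon> n d \<eta> \<alpha> \<delta> M 0]) auto
    }
  qed
  show ?thesis
    by (rule exI[of _ "1/6000"], rule conjI, simp, rule exI[of _ NN], rule conjI[OF A B])
qed


end
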